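(* Let $(X,\|\cdot\|_X)$ be a Banach space, $\mathcal{K}\subset X$ compact, and $\gamma_n=C'n^\delta\lambda^n$ with $\delta\in\mathbb{R}$, $C'>0$, $\lambda>2$. (i) For $\alpha>0$, $\beta\in\mathbb{R}$: if $\varepsilon_n(\mathcal{K})_X\asymp\frac{(\log_2n)^\beta}{n^\alpha}$ for $n\ge2$, then $d_n^{\gamma_n}(\mathcal{K})_X\asymp\frac{(\log_2n)^\beta}{n^{2\alpha}}$ for $n\ge2$. (ii) For $\alpha>0$: if $\varepsilon_n(\mathcal{K})_X\asymp\frac{1}{(\log_2n)^\alpha}$ for $n\ge2$, then $d_n^{\gamma_n}(\mathcal{K})_X\asymp\frac{1}{(\log_2n)^\alpha}$ for $n\ge2$.
   Context: $a_n\asymp b_n$ means there are constants $0<c\le C$ independent of $n$ with $cb_n\le a_n\le Cb_n$. For $m\ge0$, the entropy number $\varepsilon_m(\mathcal{K})_X$ is the infimum of all $\varepsilon>0$ such that $\mathcal{K}$ is covered by $2^m$ closed balls of radius $\varepsilon$ with centers in $X$. For $k\ge1$ and a norm $\|\cdot\|_{Y_k}$ on $\mathbb{R}^k$ let $B_{Y_k}=\{y\in\mathbb{R}^k:\|y\|_{Y_k}\le1\}$; for $\gamma\ge0$, $d^\gamma(\mathcal{K},Y_k)_X=\inf_{\Phi}\sup_{f\in\mathcal{K}}\inf_{y\in B_{Y_k}}\|f-\Phi(y)\|_X$, the infimum over all maps $\Phi:B_{Y_k}\to X$ with $\|\Phi(y)-\Phi(y')\|_X\le\gamma\|y-y'\|_{Y_k}$;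 and the Lipschitz width is $d_n^\gamma(\mathcal{K})_X=\inf_{1\le k\le n}\inf_{\|\cdot\|_{Y_k}}d^\gamma(\mathcal{K},Y_k)_X$, the inner infimum over all norms on $\mathbb{R}^k$. *)

theory Defs
  imports "HOL-Analysis.Analysis"
begin

definition asymp_equiv_ge2 :: "(nat \<Rightarrow> real) \<Rightarrow> (nat \<Rightarrow> real) \<Rightarrow> bool" where
  "asymp_equiv_ge2 a b \<longleftrightarrow>
     (\<exists>c C. 0 < c \<and> c \<le> C \<and> (\<forall>n\<ge>2. c * b n \<le> a n \<and> a n \<le> C * b n))"

definition entropy_number :: "'a::real_normed_vector set \<Rightarrow> nat \<Rightarrow> real" where
  "entropy_number K m = Inf {\<epsilon>. \<epsilon> > 0 \<and>
     (\<exists>C. finite C \<and> card C \<le> 2 ^ m \<and> K \<subseteq> (\<Union>c\<in>C. cball c \<epsilon>))}"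

text \<open>R^k is represented as functions nat \<Rightarrow> real vanishing from index k on.\<close>
definition Rk :: "nat \<Rightarrow> (nat \<Rightarrow> real) set" where
  "Rk k = {y. \<forall>i\<ge>k. y i = 0}"

definition is_norm_on_Rk :: "nat \<Rightarrow> ((nat \<Rightarrow> real) \<Rightarrow> real) \<Rightarrow> bool" where
  "is_norm_on_Rk k N \<longleftrightarrow>
     (\<forall>x\<in>Rk k. \<forall>y\<in>Rk k. N (\<lambda>i. x i + y i) \<le> N x + N y) \<and>
     (\<forall>x\<in>Rk k. \<forall>a. N (\<lambda>i. a * x i) = \<bar>a\<bar> * N x) \<and>
     (\<forall>x\<in>Rk k. N x = 0 \<longrightarrow> x = (\<lambda>i. 0))"

definition unit_ball_Rk :: "nat \<Rightarrow> ((nat \<Rightarrow> real) \<Rightarrow> real) \<Rightarrow> (nat \<Rightarrow> real) set" where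
  "unit_ball_Rk k N = {y \<in> Rk k. N y \<le> 1}"

definition lip_width_fixed ::
  "real \<Rightarrow> 'a::real_normed_vector set \<Rightarrow> nat \<Rightarrow> ((nat \<Rightarrow> real) \<Rightarrow> real) \<Rightarrow> real" where
  "lip_width_fixed \<gamma> K k N = Inf {(SUP f\<in>K. INF y\<in>unit_ball_Rk k N. norm (f - \<Phi> y)) | \<Phi>.
       \<forall>y\<in>unit_ball_Rk k N. \<forall>y'\<in>unit_ball_Rk k N.
          norm (\<Phi> y - \<Phi> y') \<le> \<gamma> * N (\<lambda>i. y i - y' i)}"

definition lip_width :: "real \<Rightarrow> 'a::real_normed_vector set \<Rightarrow> nat \<Rightarrow> real" where
  "lip_width \<gamma> K n = Inf {lip_width_fixed \<gamma> K k N | k N. 1 \<le> k \<and> k \<le> n \<and> is_norm_on_Rk k N}"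

end

theory Submission
  imports Defs "HOL-Real_Asymp.Real_Asymp"
begin

lemma Rk_zero[simp]: "(\<lambda>i. 0) \<in> Rk k" by (simp add: Rk_def)
lemma Rk_add[intro]: "x \<in> Rk k \<Longrightarrow> y \<in> Rk k \<Longrightarrow> (\<lambda>i. x i + y i) \<in> Rk k" by (simp add: Rk_def)
lemma Rk_diff[intro]: "x \<in> Rk k \<Longrightarrow> y \<in> Rk k \<Longrightarrow> (\<lambda>i. x i - y i) \<in> Rk k" by (simp add: Rk_def)
lemma Rk_scale[intro]: "x \<in> Rk k \<Longrightarrow> (\<lambda>i. a * x i) \<in> Rk k" by (simp add: Rk_def)
lemma Rk_mono: "k \<le> k' \<Longrightarrow> x \<in> Rk k \<Longrightarrow> x \<in> Rk k'" by (simp add: Rk_def)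

locale knorm =
  fixes k :: nat and N :: "(nat \<Rightarrow> real) \<Rightarrow> real"
  assumes isn: "is_norm_on_Rk k N"
begin

lemma tri: "x \<in> Rk k \<Longrightarrow> y \<in> Rk k \<Longrightarrow> N (\<lambda>i. x i + y i) \<le> N x + N y"
  using isn by (simp add: is_norm_on_Rk_def)
lemma hom: "x \<in> Rk k \<Longrightarrow> N (\<lambda>i. a * x i) = \<bar>a\<bar> * N x"
  using isn by (simp add: is_norm_on_Rk_def)
lemma defi: "x \<in> Rk k \<Longrightarrow> N x = 0 \<Longrightarrow> x = (\<lambda>i. 0)"
  using isn by (simp add: is_norm_on_Rk_def)

lemma zero[simp]: "N (\<lambda>i. 0) = 0"
  using hom[of "\<lambda>i. 0" 0] by simp

lemma minus: "x \<in> Rk k \<Longrightarrow> N (\<lambda>i. - x i) = N x"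
  using hom[of x "-1"] by simp

lemma nonneg: "x \<in> Rk k \<Longrightarrow> 0 \<le> N x"
proof -
  assume x: "x \<in> Rk k"
  have "N (\<lambda>i. x i + - x i) \<le> N x + N (\<lambda>i. - x i)"
    using tri[OF x, of "\<lambda>i. - x i"] x by (auto simp: Rk_def)
  then show ?thesis using minus[OF x] by simp
qed

lemma diff_sym: "x \<in> Rk k \<Longrightarrow> y \<in> Rk k \<Longrightarrow> N (\<lambda>i. x i - y i) = N (\<lambda>i. y i - x i)"
  using minus[of "\<lambda>i. x i - y i"] by (auto simp: Rk_def)

lemma diff_tri: "x \<in> Rk k \<Longrightarrow> y \<in> Rk k \<Longrightarrow> z \<in> Rk k \<Longrightarrow>
   N (\<lambda>i. x i - z i) \<le> N (\<lambda>i. x i - y i) + N (\<lambda>i. y i - z i)"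
  using tri[of "\<lambda>i. x i - y i" "\<lambda>i. y i - z i"] by (auto simp: Rk_def)

lemma diff_ge: "x \<in> Rk k \<Longrightarrow> y \<in> Rk k \<Longrightarrow> N x - N y \<le> N (\<lambda>i. x i - y i)"
  using tri[of "\<lambda>i. x i - y i" y] by (auto simp: Rk_def)

lemma restrict: "k' \<le> k \<Longrightarrow> is_norm_on_Rk k' N"
  using isn unfolding is_norm_on_Rk_def by (meson Rk_mono)

definition unitv :: "nat \<Rightarrow> nat \<Rightarrow> real" where "unitv j = (\<lambda>i. if i = j then 1 else 0)"

lemma partial_bound:
  assumes x: "x \<in> Rk k"
  shows "m \<le> k \<Longrightarrow> N (\<lambda>j. if j < m then x j else 0) \<le> (\<Sum>i<m. \<bar>x i\<bar> * N (unitv i))"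
proof (induction m)
  case 0
  then show ?case by simp
next
  case (Suc m)
  have e: "(\<lambda>j. if j < Suc m then x j else 0) = (\<lambda>j. (if j < m then x j else 0) + x m * unitv m j)"
    by (rule ext) (auto simp: unitv_def less_Suc_eq)
  have r1: "(\<lambda>j. if j < m then x j else 0) \<in> Rk k" using Suc by (auto simp: Rk_def)
  have r2: "unitv m \<in> Rk k" using Suc by (auto simp: Rk_def unitv_def)
  have "N (\<lambda>j. if j < Suc m then x j else 0) \<le> N (\<lambda>j. if j < m then x j else 0) + N (\<lambda>j. x m * unitv m j)"
    unfolding e by (rule tri[OF r1]) (use r2 in auto)
  also have "\<dots> \<le> (\<Sum>i<m. \<bar>x i\<bar> * N (unitv i)) + \<bar>x m\<bar> * N (unitv m)"
    using Suc hom[OF r2] by simp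
  finally show ?case by simp
qed

lemma sum_bound: "x \<in> Rk k \<Longrightarrow> N x \<le> (\<Sum>i<k. \<bar>x i\<bar> * N (unitv i))"
proof -
  assume x: "x \<in> Rk k"
  have "(\<lambda>j. if j < k then x j else 0) = x" using x by (auto simp: Rk_def)
  then show ?thesis using partial_bound[OF x, of k] by simp
qed

end

context knorm begin

lemma coord_isCont: "isCont (\<lambda>y::nat\<Rightarrow>real. y i) x"
proof -
  have "continuous_on UNIV (\<lambda>y::nat\<Rightarrow>real. y i)" by (rule continuous_on_product_coordinates)
  then show ?thesis using continuous_on_eq_continuous_at[OF open_UNIV] by blast
qed

lemma cont_N: "continuous_on (Rk k) N"
  unfolding continuous_on_def
proof
  fix x assume x: "x \<in> Rk k"
  define g where "g = (\<lambda>y. \<Sum>i<k. \<bar>y i - x i\<bar> * N (unitv i))"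
  have gt: "(g \<longlongrightarrow> g x) (at x within Rk k)"
  proof -
    have "((\<lambda>y. y i) \<longlongrightarrow> x i) (at x within Rk k)" for i
      using coord_isCont[of x i] unfolding isCont_def by (rule tendsto_within_subset) simp
    then show ?thesis unfolding g_def
      by (intro tendsto_sum tendsto_mult tendsto_const tendsto_rabs tendsto_diff)
  qed
  have gx: "g x = 0" by (simp add: g_def)
  have ev0: "\<forall>y\<in>Rk k. norm (N y - N x) \<le> g y"
  proof
    fix y assume y: "y \<in> Rk k"
    have "N y - N x \<le> N (\<lambda>i. y i - x i)" by (rule diff_ge[OF y x])
    moreover have "N x - N y \<le> N (\<lambda>i. y i - x i)" using diff_ge[OF x y] diff_sym[OF x y] by simp
    moreover have "N (\<lambda>i. y i - x i) \<le> g y"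
      using sum_bound[of "\<lambda>i. y i - x i"] x y by (auto simp: g_def)
    ultimately show "norm (N y - N x) \<le> g y" by auto
  qed
  have ev: "eventually (\<lambda>y. norm (N y - N x) \<le> g y) (at x within Rk k)"
    unfolding eventually_at_filter using ev0 by (auto intro: always_eventually)
  have "((\<lambda>y. N y - N x) \<longlongrightarrow> 0) (at x within Rk k)"
    by (rule Lim_null_comparison[OF ev]) (use gt gx in simp)
  then show "(N \<longlongrightarrow> N x) (at x within Rk k)"
    using LIM_zero_cancel by blast
qed

lemma lower: "\<exists>a>0. \<forall>x\<in>Rk k. \<forall>i. a * \<bar>x i\<bar> \<le> N x"
proof (cases "k = 0")
  case True
  show ?thesis
  proof (intro exI[of _ 1] conjI ballI allI)
    fix x i assume x: "x \<in> Rk k"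
    then have "x i = 0" using True by (simp add: Rk_def)
    then show "1 * \<bar>x i\<bar> \<le> N x" using nonneg[OF x] by simp
  qed simp
next
  case False
  define S1 :: "(nat \<Rightarrow> real) set" where "S1 = PiE UNIV (\<lambda>i. if i < k then {-1..1} else {0})"
  define S2 :: "(nat \<Rightarrow> real) set" where "S2 = (\<Union>i<k. {x. \<bar>x i\<bar> = 1})"
  define S where "S = S1 \<inter> S2"
  have "compactin (product_topology (\<lambda>i. euclidean) UNIV) S1"
    unfolding S1_def compactin_PiE by simp
  then have cS1: "compact S1"
    by (simp add: euclidean_product_topology)
  have "closed {x::nat\<Rightarrow>real. \<bar>x i\<bar> = 1}" for i
  proof -
    have "continuous_on UNIV (\<lambda>y::nat\<Rightarrow>real. y i)" by (rule continuous_on_product_coordinates)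
    then have "continuous_on UNIV (\<lambda>y::nat\<Rightarrow>real. \<bar>y i\<bar>)" by (rule continuous_on_rabs)
    then show ?thesis by (rule closed_Collect_eq) simp
  qed
  then have cS2: "closed S2" unfolding S2_def by (intro closed_UN) auto
  have cS: "compact S" unfolding S_def using cS1 cS2 by (rule compact_Int_closed)
  have S1h: "x i \<in> (if i < k then {-1..1::real} else {0})" if "x \<in> S1" for x i
    using that by (simp add: S1_def PiE_iff)
  have SR: "S \<subseteq> Rk k"
  proof
    fix x assume "x \<in> S"
    then have h: "x \<in> S1" by (simp add: S_def)
    show "x \<in> Rk k" unfolding Rk_def
    proof (intro CollectI allI impI)
      fix i assume "k \<le> i" then show "x i = 0" using S1h[OF h, of i] by simp
    qed
  qed
  have "unitv 0 \<in> S1" unfolding S1_def PiE_iff using False by (simp add: unitv_def)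
  moreover have "unitv 0 \<in> S2" unfolding S2_def using False by (simp add: unitv_def)
  ultimately have "unitv 0 \<in> S" by (simp add: S_def)
  then have Sne: "S \<noteq> {}" by blast
  have cN: "continuous_on S N" using continuous_on_subset[OF cont_N SR] .
  obtain x0 where x0: "x0 \<in> S" and x0min: "\<And>y. y \<in> S \<Longrightarrow> N x0 \<le> N y"
    using continuous_attains_inf[OF cS Sne cN] by blast
  obtain i1 where "\<bar>x0 i1\<bar> = 1" using x0 by (auto simp: S_def S2_def)
  then have "x0 \<noteq> (\<lambda>i. 0)" by auto
  moreover have "x0 \<in> Rk k" using x0 SR by blast
  ultimately have apos: "N x0 > 0" using defi[of x0] nonneg[of x0] by fastforce
  show ?thesis
  proof (intro exI[of _ "N x0"] conjI ballI allI apos)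
    fix x i assume x: "x \<in> Rk k"
    show "N x0 * \<bar>x i\<bar> \<le> N x"
    proof (cases "x = (\<lambda>i. 0)")
      case True then show ?thesis by simp
    next
      case xne: False
      define m where "m = Max ((\<lambda>i. \<bar>x i\<bar>) ` {..<k})"
      have fin: "finite ((\<lambda>i. \<bar>x i\<bar>) ` {..<k})" by simp
      have ne: "((\<lambda>i. \<bar>x i\<bar>) ` {..<k}) \<noteq> {}" using False by (simp add: lessThan_empty_iff)
      obtain i0 where i0: "i0 < k" "\<bar>x i0\<bar> = m"
        using Max_in[OF fin ne] unfolding m_def by auto
      have le: "\<bar>x j\<bar> \<le> m" for j
      proof (cases "j < k")
        case True then show ?thesis unfolding m_def by (intro Max_ge[OF fin]) simp
      next
        case False then have "x j = 0" using x by (simp add: Rk_def)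
        then show ?thesis using i0 by simp
      qed
      obtain j where "x j \<noteq> 0" using xne by auto
      then have mpos: "m > 0" using le[of j] by linarith
      define y where "y = (\<lambda>j. (1/m) * x j)"
      have "y \<in> S1" unfolding S1_def PiE_iff
      proof (intro conjI ballI)
        fix j :: nat
        show "y j \<in> (if j < k then {-1..1} else {0})"
        proof (cases "j < k")
          case True
          have "\<bar>y j\<bar> \<le> 1" using le[of j] mpos by (simp add: y_def abs_mult divide_le_eq_1)
          then show ?thesis using True by (simp add: abs_le_iff)
        next
          case False then show ?thesis using x by (simp add: y_def Rk_def)
        qed
      qed simp
      moreover have "y \<in> S2" unfolding S2_def using i0 mpos
        by (intro UN_I[of i0]) (simp_all add: y_def abs_mult)
      ultimately have yS: "y \<in> S" by (simp add: S_def)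
      have "N x0 \<le> N y" using x0min[OF yS] .
      also have "N y = N x / m" unfolding y_def using hom[OF x, of "1/m"] mpos by simp
      finally have "N x0 * m \<le> N x" using mpos by (simp add: field_simps)
      moreover have "N x0 * \<bar>x i\<bar> \<le> N x0 * m" using le[of i] apos by simp
      ultimately show ?thesis by linarith
    qed
  qed
qed

end

lemma cover_step_e:
  assumes isn: "is_norm_on_Rk (Suc k) N"
  shows "\<exists>e s. e \<in> Rk (Suc k) \<and> N e \<le> 1 \<and> s > 0 \<and> e k > s / 2 \<and>
           (\<forall>x\<in>Rk (Suc k). \<bar>x k\<bar> \<le> s * N x)"
proof -
  interpret knorm "Suc k" N by (rule knorm.intro[OF isn])
  obtain a where a: "a > 0" "\<And>x i. x \<in> Rk (Suc k) \<Longrightarrow> a * \<bar>x i\<bar> \<le> N x"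
    using lower by blast
  define B where "B = {x \<in> Rk (Suc k). N x \<le> 1}"
  define s where "s = Sup ((\<lambda>x. x k) ` B)"
  have bdd: "bdd_above ((\<lambda>x. x k) ` B)"
  proof (rule bdd_aboveI2)
    fix x assume "x \<in> B"
    then have "a * \<bar>x k\<bar> \<le> 1" using a(2)[of x k] by (auto simp: B_def)
    then have "a * x k \<le> 1" using a(1) by (smt (verit) abs_ge_self mult_left_mono)
    then show "x k \<le> 1 / a" using a(1) by (simp add: field_simps)
  qed
  define u where "u = unitv k"
  have uR: "u \<in> Rk (Suc k)" by (simp add: u_def unitv_def Rk_def)
  have "u \<noteq> (\<lambda>i. 0)" by (metis u_def unitv_def zero_neq_one)
  then have Nu: "N u > 0" using defi[OF uR] nonneg[OF uR] by fastforce
  define u' where "u' = (\<lambda>i. (1 / N u) * u i)"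
  have u'B: "u' \<in> B" unfolding B_def u'_def using hom[OF uR, of "1 / N u"] Nu uR by (auto simp: Rk_def)
  have "u' k = 1 / N u" by (simp add: u'_def u_def unitv_def)
  then have "1 / N u \<le> s" unfolding s_def using cSup_upper[OF _ bdd] u'B by (metis imageI)
  then have spos: "s > 0" using Nu by (meson less_le_trans zero_less_divide_1_iff)
  have "s / 2 < s" using spos by simp
  moreover have "(\<lambda>x. x k) ` B \<noteq> {}" using u'B by blast
  ultimately have "\<exists>v\<in>(\<lambda>x. x k) ` B. s / 2 < v"
    unfolding s_def using less_cSup_iff[OF _ bdd] by blast
  then obtain e where eB: "e \<in> B" and ek: "s / 2 < e k" by blast
  have bound: "\<bar>x k\<bar> \<le> s * N x" if x: "x \<in> Rk (Suc k)" for x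
  proof (cases "N x = 0")
    case True
    then have "x = (\<lambda>i. 0)" using defi[OF x] by simp
    then show ?thesis by simp
  next
    case False
    then have Nx: "N x > 0" using nonneg[OF x] by simp
    define y where "y = (\<lambda>i. (1 / N x) * x i)"
    define y' where "y' = (\<lambda>i. (- 1 / N x) * x i)"
    have "y \<in> B" unfolding B_def y_def using hom[OF x, of "1 / N x"] Nx x by (auto simp: Rk_def)
    then have "y k \<le> s" unfolding s_def using cSup_upper[OF _ bdd] by (metis imageI)
    moreover have "y' \<in> B" unfolding B_def y'_def using hom[OF x, of "- 1 / N x"] Nx x by (auto simp: Rk_def)
    then have "y' k \<le> s" unfolding s_def using cSup_upper[OF _ bdd] by (metis imageI)
    ultimately have "x k / N x \<le> s" "- x k / N x \<le> s" by (simp_all add: y_def y'_def)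
    then show ?thesis using Nx by (simp add: field_simps abs_le_iff)
  qed
  show ?thesis
    by (rule exI[of _ e], rule exI[of _ s]) (use eB ek spos bound in \<open>auto simp: B_def\<close>)
qed

lemma interval_cover:
  fixes R h :: real and \<tau> :: real
  assumes "R > 0" "h > 0" "\<bar>\<tau>\<bar> \<le> 2 * R"
  shows "\<exists>j\<le>nat \<lfloor>4 * R / h\<rfloor>. \<bar>\<tau> - (- 2 * R + real j * h)\<bar> \<le> h"
proof -
  define j where "j = nat \<lfloor>(\<tau> + 2 * R) / h\<rfloor>"
  have nn: "0 \<le> (\<tau> + 2 * R) / h" using assms by auto
  have jr: "real j = of_int \<lfloor>(\<tau> + 2 * R) / h\<rfloor>" unfolding j_def using nn by simp
  have "real j \<le> (\<tau> + 2 * R) / h" "(\<tau> + 2 * R) / h < real j + 1"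
    unfolding jr by linarith+
  then have a1: "real j * h \<le> \<tau> + 2 * R" "\<tau> + 2 * R < real j * h + h"
    using assms(2) by (simp_all add: field_simps)
  have "(\<tau> + 2 * R) / h \<le> 4 * R / h" using assms by (simp add: divide_right_mono)
  then have "j \<le> nat \<lfloor>4 * R / h\<rfloor>" unfolding j_def by (intro nat_mono floor_mono)
  moreover have "\<bar>\<tau> - (- 2 * R + real j * h)\<bar> \<le> h" using a1 by linarith
  ultimately show ?thesis by blast
qed

lemma cover:
  assumes "is_norm_on_Rk k N" "R > 0" "\<eta> > 0" "1 + R / \<eta> \<le> 2 ^ q"
  shows "\<exists>F. finite F \<and> F \<subseteq> Rk k \<and> card F \<le> 2 ^ (k * (3 * k + q)) \<and>
            (\<forall>x\<in>Rk k. N x \<le> R \<longrightarrow> (\<exists>z\<in>F. N (\<lambda>i. x i - z i) \<le> \<eta>))"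
  using assms
proof (induction k arbitrary: N R \<eta> q)
  case 0
  interpret knorm 0 N by (rule knorm.intro[OF 0(1)])
  show ?case
  proof (intro exI[of _ "{\<lambda>i. 0}"] conjI ballI impI)
    fix x :: "nat \<Rightarrow> real" assume "x \<in> Rk 0"
    then have "x = (\<lambda>i. 0)" by (auto simp: Rk_def)
    then show "\<exists>z\<in>{\<lambda>i. 0}. N (\<lambda>i. x i - z i) \<le> \<eta>" using 0 by simp
  qed auto
next
  case (Suc k)
  interpret knorm "Suc k" N by (rule knorm.intro[OF Suc.prems(1)])
  obtain e s where e: "e \<in> Rk (Suc k)" "N e \<le> 1" "s > 0" "e k > s / 2"
    and bnd: "\<And>x. x \<in> Rk (Suc k) \<Longrightarrow> \<bar>x k\<bar> \<le> s * N x"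
    using cover_step_e[OF Suc.prems(1)] by blast
  have ek: "e k > 0" using e by simp
  have Nk: "is_norm_on_Rk k N" by (rule restrict) simp
  have R3: "3 * R > 0" using Suc.prems by simp
  have eta2: "\<eta> / 2 > 0" using Suc.prems by simp
  have "1 + 3 * R / (\<eta> / 2) \<le> 8 * (1 + R / \<eta>)" using Suc.prems by (simp add: field_simps)
  also have "\<dots> \<le> 8 * 2 ^ q" using Suc.prems by simp
  also have "\<dots> = 2 ^ (q + 3)" by (simp add: power_add)
  finally have q3: "1 + 3 * R / (\<eta> / 2) \<le> 2 ^ (q + 3)" .
  obtain Fk where Fk: "finite Fk" "Fk \<subseteq> Rk k" "card Fk \<le> 2 ^ (k * (3 * k + (q + 3)))"
    and Fkc: "\<And>x. x \<in> Rk k \<Longrightarrow> N x \<le> 3 * R \<Longrightarrow> \<exists>z\<in>Fk. N (\<lambda>i. x i - z i) \<le> \<eta> / 2"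
    using Suc.IH[OF Nk R3 eta2 q3] by blast
  define J where "J = nat \<lfloor>4 * R / (\<eta> / 2)\<rfloor>"
  define tau where "tau = (\<lambda>j::nat. - 2 * R + real j * (\<eta> / 2))"
  define F where "F = (\<lambda>(j, z). (\<lambda>i. tau j * e i + z i)) ` ({..J} \<times> Fk)"
  have finF: "finite F" unfolding F_def using Fk by simp
  have "card F \<le> card ({..J} \<times> Fk)" unfolding F_def using Fk by (intro card_image_le) simp
  also have "\<dots> = (J + 1) * card Fk" by (simp add: card_cartesian_product)
  also have "\<dots> \<le> 2 ^ (q + 3) * 2 ^ (k * (3 * k + (q + 3)))"
  proof (rule mult_mono)
    have "real J \<le> 8 * R / \<eta>" unfolding J_def using Suc.prems by (simp add: field_simps)
    then have "real (J + 1) \<le> 8 * (1 + R / \<eta>)" using Suc.prems by (simp add: field_simps)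
    also have "\<dots> \<le> 8 * 2 ^ q" using Suc.prems by simp
    also have "\<dots> = real (2 ^ (q + 3))" by (simp add: power_add)
    finally show "J + 1 \<le> 2 ^ (q + 3)" by linarith
  qed (use Fk in auto)
  also have "\<dots> = 2 ^ ((q + 3) + k * (3 * k + (q + 3)))" by (simp add: power_add)
  also have "\<dots> \<le> 2 ^ (Suc k * (3 * Suc k + q))" proof (intro power_increasing)
    have "Suc k * (3 * Suc k + q) = (q + 3) + k * (3 * k + (q + 3)) + 3 * k" by (simp add: algebra_simps)
    then show "q + 3 + k * (3 * k + (q + 3)) \<le> Suc k * (3 * Suc k + q)" by linarith
  qed simp
  finally have cardF: "card F \<le> 2 ^ (Suc k * (3 * Suc k + q))" .
  have FR: "F \<subseteq> Rk (Suc k)"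
    unfolding F_def using Fk(2) e(1) by (auto simp: Rk_def)
  have covers: "\<exists>z\<in>F. N (\<lambda>i. x i - z i) \<le> \<eta>" if x: "x \<in> Rk (Suc k)" and Nx: "N x \<le> R" for x
  proof -
    define t where "t = x k / e k"
    have "\<bar>x k\<bar> \<le> s * R" using bnd[OF x] Nx e(3) by (meson mult_left_mono less_imp_le order_trans)
    moreover have "s * R < 2 * R * e k"
    proof -
      have "s < 2 * e k" using e(4) by simp
      then have "R * s < R * (2 * e k)" using Suc.prems(2) by (rule mult_strict_left_mono)
      then show ?thesis by (simp add: algebra_simps)
    qed
    ultimately have "\<bar>x k\<bar> \<le> 2 * R * e k" by linarith
    moreover have "\<bar>t\<bar> = \<bar>x k\<bar> / e k" unfolding t_def using ek by (simp add: abs_divide)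
    ultimately have "\<bar>t\<bar> \<le> 2 * R" using ek by (simp add: divide_le_eq)
    define z where "z = (\<lambda>i. x i - t * e i)"
    have zR1: "z \<in> Rk (Suc k)" unfolding z_def using x e(1) by (auto simp: Rk_def)
    have "z k = 0" unfolding z_def t_def using ek by simp
    have zR: "z \<in> Rk k" unfolding Rk_def
    proof (intro CollectI allI impI)
      fix i assume ki: "k \<le> i"
      show "z i = 0"
      proof (cases "i = k")
        case True then show ?thesis using \<open>z k = 0\<close> by simp
      next
        case False then have "Suc k \<le> i" using ki by simp
        then show ?thesis using zR1 by (simp add: Rk_def)
      qed
    qed
    have "N z = N (\<lambda>i. x i + (- t) * e i)" unfolding z_def by simp
    also have "\<dots> \<le> N x + N (\<lambda>i. (- t) * e i)" by (rule tri[OF x]) (use e(1) in \<open>auto simp: Rk_def\<close>)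
    also have "\<dots> = N x + \<bar>t\<bar> * N e" using hom[OF e(1), of "- t"] by simp
    also have "\<dots> \<le> R + 2 * R * 1"
      using Nx \<open>\<bar>t\<bar> \<le> 2 * R\<close> e(2) nonneg[OF e(1)] by (intro add_mono mult_mono) auto
    finally have "N z \<le> 3 * R" by simp
    then obtain z' where z': "z' \<in> Fk" "N (\<lambda>i. z i - z' i) \<le> \<eta> / 2" using Fkc[OF zR] by blast
    obtain j where j: "j \<le> J" "\<bar>t - tau j\<bar> \<le> \<eta> / 2"
      using interval_cover[OF Suc.prems(2) eta2 \<open>\<bar>t\<bar> \<le> 2 * R\<close>] unfolding J_def tau_def by blast
    have z'R: "z' \<in> Rk (Suc k)" using z' Fk(2) Rk_mono[of k "Suc k"] by auto
    have dz: "(\<lambda>i. z i - z' i) \<in> Rk (Suc k)" using zR1 z'R by auto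
    have "(\<lambda>i. x i - (tau j * e i + z' i)) = (\<lambda>i. (t - tau j) * e i + (z i - z' i))"
      unfolding z_def by (auto simp: algebra_simps)
    then have "N (\<lambda>i. x i - (tau j * e i + z' i)) = N (\<lambda>i. (t - tau j) * e i + (z i - z' i))" by simp
    also have "\<dots> \<le> N (\<lambda>i. (t - tau j) * e i) + N (\<lambda>i. z i - z' i)"
      by (rule tri) (use e(1) dz in auto)
    also have "\<dots> = \<bar>t - tau j\<bar> * N e + N (\<lambda>i. z i - z' i)" using hom[OF e(1)] by simp
    also have "\<dots> \<le> \<eta> / 2 * 1 + \<eta> / 2"
      using j(2) e(2) z'(2) nonneg[OF e(1)] Suc.prems(3) by (intro add_mono mult_mono) auto
    finally have "N (\<lambda>i. x i - (tau j * e i + z' i)) \<le> \<eta>" by simp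
    moreover have "(\<lambda>i. tau j * e i + z' i) \<in> F" unfolding F_def
      by (rule image_eqI[of _ _ "(j, z')"]) (use j(1) z'(1) in auto)
    ultimately show ?thesis by (intro bexI[of _ "\<lambda>i. tau j * e i + z' i"]) simp_all
  qed
  show ?case using finF FR cardF covers by blast
qed

locale kset =
  fixes K :: "'a::real_normed_vector set"
  assumes cK: "compact K" and Kne: "K \<noteq> {}"
begin

definition Eset :: "nat \<Rightarrow> real set" where
  "Eset m = {\<epsilon>. \<epsilon> > 0 \<and> (\<exists>C. finite C \<and> card C \<le> 2 ^ m \<and> K \<subseteq> (\<Union>c\<in>C. cball c \<epsilon>))}"

lemma e_def': "entropy_number K m = Inf (Eset m)"
  by (simp add: entropy_number_def Eset_def)

lemma bndK: "\<exists>x0 D. x0 \<in> K \<and> D > 0 \<and> (\<forall>f\<in>K. norm (f - x0) \<le> D)"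
proof -
  obtain x0 where x0: "x0 \<in> K" using Kne by blast
  have "bounded K" using cK by (rule compact_imp_bounded)
  then obtain D where D: "D > 0" "\<And>f. f \<in> K \<Longrightarrow> norm f \<le> D"
    unfolding bounded_pos by blast
  have "norm (f - x0) \<le> 2 * D" if "f \<in> K" for f
    using norm_triangle_ineq4[of f x0] D(2)[OF that] D(2)[OF x0] by simp
  moreover have "2 * D > 0" using D by simp
  ultimately show ?thesis using x0 by blast
qed

lemma Eset_ne: "Eset m \<noteq> {}"
proof -
  obtain x0 D where h: "x0 \<in> K" "D > 0" "\<forall>f\<in>K. norm (f - x0) \<le> D" using bndK by blast
  have "D \<in> Eset m" unfolding Eset_def
    using h by (intro CollectI conjI exI[of _ "{x0}"]) (auto simp: dist_norm norm_minus_commute)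
  then show ?thesis by blast
qed

lemma Eset_bdd: "bdd_below (Eset m)"
  by (rule bdd_belowI[of _ 0]) (simp add: Eset_def)

lemma e_nonneg: "0 \<le> entropy_number K m"
  unfolding e_def' by (rule cInf_greatest[OF Eset_ne]) (simp add: Eset_def)

lemma e_le: "\<epsilon> \<in> Eset m \<Longrightarrow> entropy_number K m \<le> \<epsilon>"
  unfolding e_def' by (rule cInf_lower[OF _ Eset_bdd])

lemma e_le_cover: "\<epsilon> > 0 \<Longrightarrow> finite C \<Longrightarrow> card C \<le> 2 ^ m \<Longrightarrow> K \<subseteq> (\<Union>c\<in>C. cball c \<epsilon>) \<Longrightarrow>
   entropy_number K m \<le> \<epsilon>"
  by (rule e_le) (auto simp: Eset_def)

lemma e_mono: "m \<le> m' \<Longrightarrow> entropy_number K m' \<le> entropy_number K m"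
proof -
  assume mm: "m \<le> m'"
  have "Eset m \<subseteq> Eset m'" unfolding Eset_def
  proof safe
    fix \<epsilon> C assume h: "0 < \<epsilon>" "finite C" "card C \<le> 2 ^ m" "K \<subseteq> (\<Union>c\<in>C. cball c \<epsilon>)"
    have "(2::nat) ^ m \<le> 2 ^ m'" using mm by (simp add: power_increasing)
    then have "card C \<le> 2 ^ m'" using h(3) by linarith
    then show "\<exists>C. finite C \<and> card C \<le> 2 ^ m' \<and> K \<subseteq> (\<Union>c\<in>C. cball c \<epsilon>)" using h by blast
  qed
  then show ?thesis unfolding e_def' by (rule cInf_superset_mono[OF Eset_ne Eset_bdd])
qed

lemma e_ex: "entropy_number K m < t \<Longrightarrow> \<exists>\<epsilon>\<in>Eset m. \<epsilon> < t"
  unfolding e_def' using cInf_less_iff[OF Eset_ne Eset_bdd] by blast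

definition lipset :: "real \<Rightarrow> nat \<Rightarrow> ((nat \<Rightarrow> real) \<Rightarrow> real) \<Rightarrow> ((nat \<Rightarrow> real) \<Rightarrow> 'a) set" where
  "lipset \<gamma> k N = {\<Phi>. \<forall>y\<in>unit_ball_Rk k N. \<forall>y'\<in>unit_ball_Rk k N.
          norm (\<Phi> y - \<Phi> y') \<le> \<gamma> * N (\<lambda>i. y i - y' i)}"

definition val :: "nat \<Rightarrow> ((nat \<Rightarrow> real) \<Rightarrow> real) \<Rightarrow> ((nat \<Rightarrow> real) \<Rightarrow> 'a) \<Rightarrow> real" where
  "val k N \<Phi> = (SUP f\<in>K. INF y\<in>unit_ball_Rk k N. norm (f - \<Phi> y))"

lemma lwf_def': "lip_width_fixed \<gamma> K k N = Inf (val k N ` lipset \<gamma> k N)"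
  unfolding lip_width_fixed_def val_def lipset_def by (simp only: setcompr_eq_image)

lemma ball_zero: "is_norm_on_Rk k N \<Longrightarrow> (\<lambda>i. 0) \<in> unit_ball_Rk k N"
proof -
  assume h: "is_norm_on_Rk k N"
  have "N (\<lambda>i. 0) = 0" using knorm.zero[OF knorm.intro[OF h]] .
  then show ?thesis by (simp add: unit_ball_Rk_def)
qed

lemma ball_ne: "is_norm_on_Rk k N \<Longrightarrow> unit_ball_Rk k N \<noteq> {}"
  using ball_zero by blast

lemma inf_bdd: "bdd_below ((\<lambda>y. norm (f - \<Phi> y)) ` A)"
  by (rule bdd_belowI[of _ 0]) auto

lemma inf_bdd_above:
  assumes "is_norm_on_Rk k N"
  shows "bdd_above ((\<lambda>f. INF y\<in>unit_ball_Rk k N. norm (f - \<Phi> y)) ` K)"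
proof -
  obtain x0 D where h: "x0 \<in> K" "D > 0" "\<forall>f\<in>K. norm (f - x0) \<le> D" using bndK by blast
  show ?thesis
  proof (rule bdd_aboveI2)
    fix f assume f: "f \<in> K"
    have "(INF y\<in>unit_ball_Rk k N. norm (f - \<Phi> y)) \<le> norm (f - \<Phi> (\<lambda>i. 0))"
      by (rule cINF_lower[OF inf_bdd ball_zero[OF assms]])
    also have "\<dots> \<le> norm (f - x0) + norm (x0 - \<Phi> (\<lambda>i. 0))" by (rule norm_diff_triangle_le[of _ x0]) simp_all
    also have "\<dots> \<le> D + norm (x0 - \<Phi> (\<lambda>i. 0))" using h f by simp
    finally show "(INF y\<in>unit_ball_Rk k N. norm (f - \<Phi> y)) \<le> D + norm (x0 - \<Phi> (\<lambda>i. 0))" .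
  qed
qed

lemma inf_nonneg: "is_norm_on_Rk k N \<Longrightarrow> 0 \<le> (INF y\<in>unit_ball_Rk k N. norm (f - \<Phi> y))"
  by (rule cINF_greatest[OF ball_ne]) auto

lemma val_nonneg: "is_norm_on_Rk k N \<Longrightarrow> 0 \<le> val k N \<Phi>"
proof -
  assume n: "is_norm_on_Rk k N"
  obtain f where f: "f \<in> K" using Kne by blast
  have "0 \<le> (INF y\<in>unit_ball_Rk k N. norm (f - \<Phi> y))" by (rule inf_nonneg[OF n])
  also have "\<dots> \<le> val k N \<Phi>" unfolding val_def by (rule cSUP_upper[OF f inf_bdd_above[OF n]])
  finally show ?thesis .
qed

lemma val_lt:
  assumes n: "is_norm_on_Rk k N" and v: "val k N \<Phi> < t" and f: "f \<in> K"
  shows "\<exists>y\<in>unit_ball_Rk k N. norm (f - \<Phi> y) < t"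
proof -
  have "(INF y\<in>unit_ball_Rk k N. norm (f - \<Phi> y)) \<le> val k N \<Phi>"
    unfolding val_def by (rule cSUP_upper[OF f inf_bdd_above[OF n]])
  then have "(INF y\<in>unit_ball_Rk k N. norm (f - \<Phi> y)) < t" using v by simp
  then show ?thesis using cINF_less_iff[OF ball_ne[OF n] inf_bdd] by blast
qed

lemma val_le:
  assumes n: "is_norm_on_Rk k N"
    and h: "\<And>f. f \<in> K \<Longrightarrow> \<exists>y\<in>unit_ball_Rk k N. norm (f - \<Phi> y) \<le> \<epsilon>"
  shows "val k N \<Phi> \<le> \<epsilon>"
  unfolding val_def
proof (rule cSUP_least[OF Kne])
  fix f assume f: "f \<in> K"
  then obtain y where y: "y \<in> unit_ball_Rk k N" "norm (f - \<Phi> y) \<le> \<epsilon>" using h by blast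
  have "(INF y\<in>unit_ball_Rk k N. norm (f - \<Phi> y)) \<le> norm (f - \<Phi> y)"
    by (rule cINF_lower[OF inf_bdd y(1)])
  then show "(INF y\<in>unit_ball_Rk k N. norm (f - \<Phi> y)) \<le> \<epsilon>" using y by simp
qed

lemma const_lip: "\<gamma> \<ge> 0 \<Longrightarrow> is_norm_on_Rk k N \<Longrightarrow> (\<lambda>_. c) \<in> lipset \<gamma> k N"
  unfolding lipset_def unit_ball_Rk_def
  using knorm.nonneg[OF knorm.intro] by (auto intro!: mult_nonneg_nonneg)

lemma lwf_bdd: "is_norm_on_Rk k N \<Longrightarrow> bdd_below (val k N ` lipset \<gamma> k N)"
  by (rule bdd_belowI[of _ 0]) (auto intro: val_nonneg)

lemma lwf_le: "is_norm_on_Rk k N \<Longrightarrow> \<Phi> \<in> lipset \<gamma> k N \<Longrightarrow> lip_width_fixed \<gamma> K k N \<le> val k N \<Phi>"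
  unfolding lwf_def' by (rule cInf_lower) (auto intro: lwf_bdd)

lemma lwf_nonneg: "\<gamma> \<ge> 0 \<Longrightarrow> is_norm_on_Rk k N \<Longrightarrow> 0 \<le> lip_width_fixed \<gamma> K k N"
proof -
  assume h: "\<gamma> \<ge> 0" "is_norm_on_Rk k N"
  have "val k N ` lipset \<gamma> k N \<noteq> {}" using const_lip[OF h(1,2)] by blast
  then show ?thesis unfolding lwf_def' by (rule cInf_greatest) (use h val_nonneg in auto)
qed

lemma lwf_lt: "\<gamma> \<ge> 0 \<Longrightarrow> is_norm_on_Rk k N \<Longrightarrow> lip_width_fixed \<gamma> K k N < t \<Longrightarrow>
   \<exists>\<Phi>\<in>lipset \<gamma> k N. val k N \<Phi> < t"
proof -
  assume h: "\<gamma> \<ge> 0" "is_norm_on_Rk k N" "lip_width_fixed \<gamma> K k N < t"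
  have "val k N ` lipset \<gamma> k N \<noteq> {}" using const_lip[OF h(1,2)] by blast
  then show ?thesis using h(3) unfolding lwf_def' using cInf_less_iff[OF _ lwf_bdd[OF h(2)]] by blast
qed

end

definition supnorm :: "nat \<Rightarrow> (nat \<Rightarrow> real) \<Rightarrow> real" where
  "supnorm n y = Max ((\<lambda>i. \<bar>y i\<bar>) ` {..<n})"

lemma sn_ge: "i < n \<Longrightarrow> \<bar>y i\<bar> \<le> supnorm n y"
  unfolding supnorm_def by (rule Max_ge) auto

lemma sn_le: "n \<ge> 1 \<Longrightarrow> (\<And>i. i < n \<Longrightarrow> \<bar>y i\<bar> \<le> c) \<Longrightarrow> supnorm n y \<le> c"
  unfolding supnorm_def by (subst Max_le_iff) (auto simp: lessThan_empty_iff)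

lemma sn_nonneg: "n \<ge> 1 \<Longrightarrow> 0 \<le> supnorm n y"
  using sn_ge[of 0 n y] by simp

lemma sn_norm: assumes n: "n \<ge> 1" shows "is_norm_on_Rk n (supnorm n)"
  unfolding is_norm_on_Rk_def
proof (intro conjI ballI allI impI)
  fix x y assume "x \<in> Rk n" "y \<in> Rk n"
  show "supnorm n (\<lambda>i. x i + y i) \<le> supnorm n x + supnorm n y"
  proof (rule sn_le[OF n])
    fix i assume "i < n"
    then show "\<bar>x i + y i\<bar> \<le> supnorm n x + supnorm n y"
      using sn_ge[of i n x] sn_ge[of i n y] abs_triangle_ineq[of "x i" "y i"] by linarith
  qed
next
  fix x a assume "x \<in> Rk n"
  have le1: "supnorm n (\<lambda>i. a * x i) \<le> \<bar>a\<bar> * supnorm n x"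
  proof (rule sn_le[OF n])
    fix i assume "i < n"
    then show "\<bar>a * x i\<bar> \<le> \<bar>a\<bar> * supnorm n x"
      using sn_ge[of i n x] by (simp add: abs_mult mult_left_mono)
  qed
  have le2: "\<bar>a\<bar> * supnorm n x \<le> supnorm n (\<lambda>i. a * x i)"
  proof (cases "a = 0")
    case True then show ?thesis using sn_nonneg[OF n] by simp
  next
    case False
    have "supnorm n x \<le> supnorm n (\<lambda>i. a * x i) / \<bar>a\<bar>"
    proof (rule sn_le[OF n])
      fix i assume "i < n"
      then have "\<bar>a * x i\<bar> \<le> supnorm n (\<lambda>i. a * x i)" by (rule sn_ge)
      then show "\<bar>x i\<bar> \<le> supnorm n (\<lambda>i. a * x i) / \<bar>a\<bar>"
        using False by (simp add: abs_mult field_simps)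
    qed
    then show ?thesis using False by (simp add: field_simps)
  qed
  show "supnorm n (\<lambda>i. a * x i) = \<bar>a\<bar> * supnorm n x" using le1 le2 by linarith
next
  fix x assume x: "x \<in> Rk n" and z: "supnorm n x = 0"
  show "x = (\<lambda>i. 0)"
  proof
    fix i show "x i = 0"
    proof (cases "i < n")
      case True then show ?thesis using sn_ge[of i n x] z by simp
    next
      case False then show ?thesis using x by (simp add: Rk_def)
    qed
  qed
qed

context kset begin

definition LWset :: "real \<Rightarrow> nat \<Rightarrow> real set" where
  "LWset \<gamma> n = {lip_width_fixed \<gamma> K k N | k N. 1 \<le> k \<and> k \<le> n \<and> is_norm_on_Rk k N}"

lemma lw_def': "lip_width \<gamma> K n = Inf (LWset \<gamma> n)"
  by (simp add: lip_width_def LWset_def)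

lemma LWset_ne: "n \<ge> 1 \<Longrightarrow> LWset \<gamma> n \<noteq> {}"
  unfolding LWset_def using sn_norm[of 1] by blast

lemma LWset_bdd: "\<gamma> \<ge> 0 \<Longrightarrow> bdd_below (LWset \<gamma> n)"
  unfolding LWset_def by (rule bdd_belowI[of _ 0]) (auto intro: lwf_nonneg)

lemma L_le:
  assumes "\<gamma> \<ge> 0" "1 \<le> k" "k \<le> n" "is_norm_on_Rk k N" "\<Phi> \<in> lipset \<gamma> k N"
  shows "lip_width \<gamma> K n \<le> val k N \<Phi>"
proof -
  have "lip_width \<gamma> K n \<le> lip_width_fixed \<gamma> K k N"
    unfolding lw_def' by (rule cInf_lower[OF _ LWset_bdd[OF assms(1)]]) (use assms in \<open>auto simp: LWset_def\<close>)
  also have "\<dots> \<le> val k N \<Phi>" by (rule lwf_le[OF assms(4,5)])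
  finally show ?thesis .
qed

lemma L_nonneg: "\<gamma> \<ge> 0 \<Longrightarrow> n \<ge> 1 \<Longrightarrow> 0 \<le> lip_width \<gamma> K n"
  unfolding lw_def' by (rule cInf_greatest[OF LWset_ne]) (auto simp: LWset_def intro: lwf_nonneg)

lemma L_lt:
  assumes "\<gamma> \<ge> 0" "n \<ge> 1" "lip_width \<gamma> K n < t"
  shows "\<exists>k N \<Phi>. 1 \<le> k \<and> k \<le> n \<and> is_norm_on_Rk k N \<and> \<Phi> \<in> lipset \<gamma> k N \<and> val k N \<Phi> < t"
proof -
  obtain w where "w \<in> LWset \<gamma> n" "w < t"
    using assms(3) unfolding lw_def' using cInf_less_iff[OF LWset_ne[OF assms(2)] LWset_bdd[OF assms(1)]] by blast
  then obtain k N where kN: "1 \<le> k" "k \<le> n" "is_norm_on_Rk k N" "lip_width_fixed \<gamma> K k N < t"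
    unfolding LWset_def by blast
  then obtain \<Phi> where "\<Phi> \<in> lipset \<gamma> k N" "val k N \<Phi> < t" using lwf_lt[OF assms(1)] by blast
  then show ?thesis using kN by blast
qed

lemma LB:
  assumes g: "\<gamma> > 0" and n: "n \<ge> 1" and t: "t > 0" and eta: "\<eta> > 0"
    and q: "1 + 2 / \<eta> \<le> 2 ^ q" and L: "lip_width \<gamma> K n < t"
  shows "entropy_number K (n * (3 * n + q)) \<le> t + \<gamma> * \<eta>"
proof -
  obtain k N \<Phi> where kN: "1 \<le> k" "k \<le> n" "is_norm_on_Rk k N" and Phi: "\<Phi> \<in> lipset \<gamma> k N"
    and v: "val k N \<Phi> < t"
    using L_lt[OF _ n L] g by auto
  interpret knorm k N by (rule knorm.intro[OF kN(3)])
  have q': "1 + 1 / (\<eta> / 2) \<le> 2 ^ q" using q by simp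
  obtain F where F: "finite F" "F \<subseteq> Rk k" "card F \<le> 2 ^ (k * (3 * k + q))"
    and Fc: "\<And>x. x \<in> Rk k \<Longrightarrow> N x \<le> 1 \<Longrightarrow> \<exists>z\<in>F. N (\<lambda>i. x i - z i) \<le> \<eta> / 2"
    using cover[OF kN(3) _ _ q'] eta by auto
  define B where "B = unit_ball_Rk k N"
  define F2 where "F2 = {z \<in> F. \<exists>y\<in>B. N (\<lambda>i. y i - z i) \<le> \<eta> / 2}"
  define \<sigma> where "\<sigma> = (\<lambda>z. SOME y. y \<in> B \<and> N (\<lambda>i. y i - z i) \<le> \<eta> / 2)"
  have \<sigma>: "\<sigma> z \<in> B \<and> N (\<lambda>i. \<sigma> z i - z i) \<le> \<eta> / 2" if "z \<in> F2" for z
  proof -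
    from that obtain y where "y \<in> B \<and> N (\<lambda>i. y i - z i) \<le> \<eta> / 2" unfolding F2_def by blast
    then show ?thesis unfolding \<sigma>_def by (rule someI[where P="\<lambda>y. y \<in> B \<and> N (\<lambda>i. y i - z i) \<le> \<eta> / 2"])
  qed
  define C where "C = (\<lambda>z. \<Phi> (\<sigma> z)) ` F2"
  have finC: "finite C" unfolding C_def F2_def using F(1) by simp
  have "card C \<le> card F2" unfolding C_def using F(1) F2_def by (intro card_image_le) simp
  also have "\<dots> \<le> card F" unfolding F2_def using F(1) by (intro card_mono) auto
  also have "\<dots> \<le> 2 ^ (k * (3 * k + q))" by (rule F(3))
  also have "\<dots> \<le> 2 ^ (n * (3 * n + q))"
    using kN by (intro power_increasing mult_mono add_mono) auto
  finally have cardC: "card C \<le> 2 ^ (n * (3 * n + q))" .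
  have covK: "K \<subseteq> (\<Union>c\<in>C. cball c (t + \<gamma> * \<eta>))"
  proof
    fix f assume f: "f \<in> K"
    obtain y where y: "y \<in> unit_ball_Rk k N" "norm (f - \<Phi> y) < t" using val_lt[OF kN(3) v f] by blast
    then have yR: "y \<in> Rk k" "N y \<le> 1" by (auto simp: unit_ball_Rk_def)
    obtain z where z: "z \<in> F" "N (\<lambda>i. y i - z i) \<le> \<eta> / 2" using Fc[OF yR] by blast
    have zF2: "z \<in> F2" unfolding F2_def B_def using z y(1) by blast
    define y' where "y' = \<sigma> z"
    have y': "y' \<in> B" "N (\<lambda>i. y' i - z i) \<le> \<eta> / 2" using \<sigma>[OF zF2] unfolding y'_def by auto
    have y'R: "y' \<in> Rk k" using y'(1) by (simp add: B_def unit_ball_Rk_def)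
    have zR: "z \<in> Rk k" using z(1) F(2) by blast
    have "N (\<lambda>i. y i - y' i) \<le> N (\<lambda>i. y i - z i) + N (\<lambda>i. z i - y' i)"
      by (rule diff_tri[OF yR(1) zR y'R])
    also have "N (\<lambda>i. z i - y' i) = N (\<lambda>i. y' i - z i)" by (rule diff_sym[OF zR y'R])
    finally have "N (\<lambda>i. y i - y' i) \<le> \<eta>" using z(2) y'(2) by simp
    moreover have "norm (\<Phi> y - \<Phi> y') \<le> \<gamma> * N (\<lambda>i. y i - y' i)"
      using Phi y(1) y'(1) unfolding lipset_def B_def by blast
    ultimately have "norm (\<Phi> y - \<Phi> y') \<le> \<gamma> * \<eta>" using g by (smt (verit) mult_left_mono)
    then have "norm (f - \<Phi> y') \<le> t + \<gamma> * \<eta>"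
      using y(2) norm_diff_triangle_le[of f "\<Phi> y" "t" "\<Phi> y'" "\<gamma> * \<eta>"] by simp
    then have "f \<in> cball (\<Phi> y') (t + \<gamma> * \<eta>)" by (simp add: dist_norm norm_minus_commute)
    moreover have "\<Phi> y' \<in> C" unfolding C_def y'_def using zF2 by blast
    ultimately show "f \<in> (\<Union>c\<in>C. cball c (t + \<gamma> * \<eta>))" by blast
  qed
  show ?thesis
    by (rule e_le_cover[OF _ finC cardC covK]) (use t g eta in \<open>simp add: add_pos_nonneg\<close>)
qed

end

lemma sn_tri: "n \<ge> 1 \<Longrightarrow> supnorm n (\<lambda>i. x i - z i) \<le> supnorm n (\<lambda>i. x i - y i) + supnorm n (\<lambda>i. y i - z i)"
proof (rule sn_le)
  fix i assume "n \<ge> 1" "i < n"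
  then show "\<bar>x i - z i\<bar> \<le> supnorm n (\<lambda>i. x i - y i) + supnorm n (\<lambda>i. y i - z i)"
    using sn_ge[of i n "\<lambda>i. x i - y i"] sn_ge[of i n "\<lambda>i. y i - z i"] by simp
qed

lemma sn_sym: "supnorm n (\<lambda>i. x i - y i) = supnorm n (\<lambda>i. y i - x i)"
  unfolding supnorm_def by (simp add: abs_minus_commute)

lemma sn_self: "n \<ge> 1 \<Longrightarrow> supnorm n (\<lambda>i. x i - x i) = 0"
  using sn_le[of n "\<lambda>i. x i - x i" 0] sn_nonneg[of n "\<lambda>i. x i - x i"] by simp

lemma bump_lip:
  assumes n: "n \<ge> 1" and M: "M \<ge> 0"
  shows "\<bar>max 0 (1 - M * supnorm n (\<lambda>i. y i - p i)) - max 0 (1 - M * supnorm n (\<lambda>i. y' i - p i))\<bar>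
         \<le> M * supnorm n (\<lambda>i. y i - y' i)"
proof -
  have a: "supnorm n (\<lambda>i. y i - p i) \<le> supnorm n (\<lambda>i. y i - y' i) + supnorm n (\<lambda>i. y' i - p i)"
    by (rule sn_tri[OF n])
  have b: "supnorm n (\<lambda>i. y' i - p i) \<le> supnorm n (\<lambda>i. y' i - y i) + supnorm n (\<lambda>i. y i - p i)"
    by (rule sn_tri[OF n])
  have c: "supnorm n (\<lambda>i. y' i - y i) = supnorm n (\<lambda>i. y i - y' i)" by (rule sn_sym)
  have "\<bar>supnorm n (\<lambda>i. y i - p i) - supnorm n (\<lambda>i. y' i - p i)\<bar> \<le> supnorm n (\<lambda>i. y i - y' i)"
    using a b c by linarith
  then have "\<bar>M * supnorm n (\<lambda>i. y i - p i) - M * supnorm n (\<lambda>i. y' i - p i)\<bar> \<le> M * supnorm n (\<lambda>i. y i - y' i)"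
    using M by (metis abs_mult abs_of_nonneg mult_left_mono right_diff_distrib)
  then show ?thesis by linarith
qed

lemma grid_card:
  fixes n M :: nat
  defines "G \<equiv> {g::nat\<Rightarrow>nat. (\<forall>i<n. g i < M) \<and> (\<forall>i\<ge>n. g i = 0)}"
  shows "finite G \<and> card G = M ^ n"
proof -
  define r where "r = (\<lambda>g::nat\<Rightarrow>nat. restrict g {..<n})"
  have inj: "inj_on r G"
  proof (rule inj_onI)
    fix g g' assume g: "g \<in> G" "g' \<in> G" "r g = r g'"
    show "g = g'"
    proof
      fix i show "g i = g' i"
      proof (cases "i < n")
        case True then show ?thesis using fun_cong[OF g(3), of i] by (simp add: r_def)
      next
        case False then show ?thesis using g(1,2) by (simp add: G_def)
      qed
    qed
  qed
  have img: "r ` G = PiE {..<n} (\<lambda>_. {..<M})"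
  proof
    show "r ` G \<subseteq> PiE {..<n} (\<lambda>_. {..<M})"
    proof
      fix h assume "h \<in> r ` G"
      then obtain g where g: "g \<in> G" "h = r g" by blast
      then show "h \<in> PiE {..<n} (\<lambda>_. {..<M})" unfolding r_def using g(1)
        by (simp add: G_def PiE_iff)
    qed
  next
    show "PiE {..<n} (\<lambda>_. {..<M}) \<subseteq> r ` G"
    proof
      fix h assume h: "h \<in> PiE {..<n} (\<lambda>_. {..<M})"
      define g where "g = (\<lambda>i. if i < n then h i else 0)"
      have "g \<in> G" using h by (auto simp: g_def G_def PiE_iff)
      moreover have "r g = h" using h unfolding r_def g_def
        by (auto simp: restrict_def PiE_iff extensional_def)
      ultimately show "h \<in> r ` G" by blast
    qed
  qed
  have "finite (r ` G)" unfolding img by (simp add: finite_PiE)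
  then have fin: "finite G" using finite_imageD[OF _ inj] by blast
  have "card G = card (r ` G)" using card_image[OF inj] by simp
  also have "\<dots> = M ^ n" unfolding img by (simp add: card_PiE)
  finally show ?thesis using fin by simp
qed

context kset begin

lemma grid_ub:
  assumes x0: "x0 \<in> K" and D: "\<forall>f\<in>K. norm (f - x0) \<le> D" and n: "n \<ge> 1"
    and gam: "2 * 2 ^ n * (2 * D + 1) \<le> \<gamma>" and eps: "\<epsilon> > 0" "\<epsilon> \<le> D + 1"
    and C: "finite C" "card C \<le> 2 ^ (n * n)" "K \<subseteq> (\<Union>c\<in>C. cball c \<epsilon>)"
  shows "lip_width \<gamma> K n \<le> \<epsilon>"
proof -
  define M :: nat where "M = 2 ^ n"
  define Mr where "Mr = real M"
  have Mr1: "Mr \<ge> 1" unfolding Mr_def M_def by simp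
  define G where "G = {g::nat\<Rightarrow>nat. (\<forall>i<n. g i < M) \<and> (\<forall>i\<ge>n. g i = 0)}"
  have finG: "finite G" and cardG0: "card G = M ^ n" using grid_card[of n M] unfolding G_def by auto
  have cardG: "card G = 2 ^ (n * n)" using cardG0 unfolding M_def by (simp add: power_mult)
  define C' where "C' = {c\<in>C. \<exists>f\<in>K. dist c f \<le> \<epsilon>}"
  have finC': "finite C'" unfolding C'_def using C(1) by simp
  have "card C' \<le> card C" unfolding C'_def using C(1) by (intro card_mono) auto
  then have cardC': "card C' \<le> card G" using C(2) cardG by simp
  obtain f0 where f0: "f0 \<in> K" using Kne by blast
  then obtain c0 where c0: "c0 \<in> C" "f0 \<in> cball c0 \<epsilon>" using C(3) by blast
  have c0C': "c0 \<in> C'" unfolding C'_def using c0 f0 by auto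
  obtain h where h: "h ` C' \<subseteq> G" "inj_on h C'" using card_le_inj[OF finC' finG cardC'] by blast
  define cg where "cg = (\<lambda>g. if g \<in> h ` C' then the_inv_into C' h g else c0)"
  have cgC': "cg g \<in> C'" for g
    unfolding cg_def using the_inv_into_into[OF h(2), of g C'] c0C' by auto
  have cgh: "cg (h c) = c" if "c \<in> C'" for c
    unfolding cg_def using that the_inv_into_f_f[OF h(2) that] by auto
  define R0 where "R0 = 2 * D + 1"
  have wb: "norm (cg g - x0) \<le> R0" for g
  proof -
    obtain f where f: "f \<in> K" "dist (cg g) f \<le> \<epsilon>" using cgC'[of g] unfolding C'_def by blast
    have "norm (cg g - x0) \<le> norm (cg g - f) + norm (f - x0)" by (rule norm_diff_triangle_le[of _ f]) simp_all
    also have "\<dots> \<le> \<epsilon> + D" using f D[rule_format, OF f(1)] by (simp add: dist_norm)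
    finally show ?thesis using eps unfolding R0_def by simp
  qed
  have R0pos: "R0 \<ge> 0" using wb[of undefined] by (meson norm_ge_zero order_trans)
  define p where "p = (\<lambda>g::nat\<Rightarrow>nat. \<lambda>i. if i < n then - 1 + (2 * real (g i) + 1) / Mr else 0)"
  define Sn where "Sn = supnorm n"
  define \<phi> where "\<phi> = (\<lambda>g y. max 0 (1 - Mr * Sn (\<lambda>i. y i - p g i)))"
  define w where "w = (\<lambda>g. cg g - x0)"
  define \<Phi> where "\<Phi> = (\<lambda>y. x0 + (\<Sum>g\<in>G. \<phi> g y *\<^sub>R w g))"
  have sep: "2 / Mr \<le> Sn (\<lambda>i. p g i - p g' i)" if g: "g \<in> G" "g' \<in> G" "g \<noteq> g'" for g g'
  proof -
    obtain i where i: "g i \<noteq> g' i" using g(3) by blast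
    have iN: "i < n"
    proof (rule ccontr)
      assume "\<not> i < n"
      then have "g i = 0" "g' i = 0" using g(1,2) unfolding G_def by auto
      then show False using i by simp
    qed
    have "1 \<le> \<bar>real (g i) - real (g' i)\<bar>" using i by linarith
    then have "2 / Mr \<le> 2 * \<bar>real (g i) - real (g' i)\<bar> / Mr" using Mr1 by (simp add: divide_right_mono)
    also have "\<dots> = \<bar>p g i - p g' i\<bar>"
    proof -
      have "p g i - p g' i = 2 * (real (g i) - real (g' i)) / Mr" unfolding p_def using iN Mr1
        by (simp add: diff_divide_distrib[symmetric] algebra_simps)
      moreover have "\<bar>2 * real (g i) - 2 * real (g' i)\<bar> = 2 * \<bar>real (g i) - real (g' i)\<bar>" by (simp add: abs_if)
      ultimately show ?thesis using Mr1 by (simp add: abs_divide)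
    qed
    also have "\<dots> \<le> Sn (\<lambda>i. p g i - p g' i)" unfolding Sn_def by (rule sn_ge[OF iN])
    finally show ?thesis .
  qed
  have \<phi>nn: "0 \<le> \<phi> g y" for g y unfolding \<phi>_def by simp
  have one: "g = g'" if g: "g \<in> G" "g' \<in> G" "\<phi> g y > 0" "\<phi> g' y > 0" for g g' y
  proof (rule ccontr)
    assume ne: "g \<noteq> g'"
    have a: "Mr * Sn (\<lambda>i. y i - p g i) < 1" using g(3) unfolding \<phi>_def by simp
    have b: "Mr * Sn (\<lambda>i. y i - p g' i) < 1" using g(4) unfolding \<phi>_def by simp
    have "Sn (\<lambda>i. p g i - p g' i) \<le> Sn (\<lambda>i. p g i - y i) + Sn (\<lambda>i. y i - p g' i)"
      unfolding Sn_def by (rule sn_tri[OF n])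
    also have "Sn (\<lambda>i. p g i - y i) = Sn (\<lambda>i. y i - p g i)" unfolding Sn_def by (rule sn_sym)
    finally have "Mr * Sn (\<lambda>i. p g i - p g' i) \<le> Mr * Sn (\<lambda>i. y i - p g i) + Mr * Sn (\<lambda>i. y i - p g' i)"
      using Mr1 by (simp add: distrib_left[symmetric])
    also have "\<dots> < 2" using a b by simp
    finally have "Mr * Sn (\<lambda>i. p g i - p g' i) < 2" .
    moreover have "2 \<le> Mr * Sn (\<lambda>i. p g i - p g' i)"
      using sep[OF g(1,2) ne] Mr1 by (simp add: field_simps)
    ultimately show False by simp
  qed
  have \<phi>lip: "\<bar>\<phi> g y - \<phi> g y'\<bar> \<le> Mr * Sn (\<lambda>i. y i - y' i)" for g y y'
    unfolding \<phi>_def Sn_def by (rule bump_lip[OF n]) (use Mr1 in simp)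
  have card1: "card {g\<in>G. \<phi> g y > 0} \<le> 1" for y
  proof -
    have fin: "finite {g\<in>G. \<phi> g y > 0}" using finG by simp
    have "card {g\<in>G. \<phi> g y > 0} \<le> Suc 0" using card_le_Suc0_iff_eq[OF fin] one by blast
    then show ?thesis by simp
  qed
  have lip: "norm (\<Phi> y - \<Phi> y') \<le> \<gamma> * Sn (\<lambda>i. y i - y' i)" for y y'
  proof -
    define T where "T = {g\<in>G. \<phi> g y > 0} \<union> {g\<in>G. \<phi> g y' > 0}"
    have finT: "finite T" unfolding T_def using finG by simp
    have cardT: "card T \<le> 2"
      unfolding T_def using card_Un_le[of "{g\<in>G. \<phi> g y > 0}" "{g\<in>G. \<phi> g y' > 0}"] card1[of y] card1[of y']
      by linarith
    have "\<Phi> y - \<Phi> y' = (\<Sum>g\<in>G. (\<phi> g y - \<phi> g y') *\<^sub>R w g)"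
      unfolding \<Phi>_def by (simp add: sum_subtractf[symmetric] scaleR_diff_left)
    then have "norm (\<Phi> y - \<Phi> y') \<le> (\<Sum>g\<in>G. norm ((\<phi> g y - \<phi> g y') *\<^sub>R w g))"
      using norm_sum by metis
    also have "\<dots> = (\<Sum>g\<in>T. norm ((\<phi> g y - \<phi> g y') *\<^sub>R w g))"
    proof (rule sum.mono_neutral_right[OF finG])
      show "T \<subseteq> G" unfolding T_def by auto
      show "\<forall>i\<in>G - T. norm ((\<phi> i y - \<phi> i y') *\<^sub>R w i) = 0"
      proof
        fix g assume "g \<in> G - T"
        then have "\<phi> g y = 0" "\<phi> g y' = 0" unfolding T_def using \<phi>nn[of g y] \<phi>nn[of g y'] by auto
        then show "norm ((\<phi> g y - \<phi> g y') *\<^sub>R w g) = 0" by simp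
      qed
    qed
    also have "\<dots> \<le> of_nat (card T) * (Mr * Sn (\<lambda>i. y i - y' i) * R0)"
    proof (rule sum_bounded_above)
      fix g assume "g \<in> T"
      have "norm ((\<phi> g y - \<phi> g y') *\<^sub>R w g) = \<bar>\<phi> g y - \<phi> g y'\<bar> * norm (w g)" by simp
      also have "\<dots> \<le> Mr * Sn (\<lambda>i. y i - y' i) * R0"
        using \<phi>lip[of g y y'] wb[of g] unfolding w_def by (intro mult_mono) auto
      finally show "norm ((\<phi> g y - \<phi> g y') *\<^sub>R w g) \<le> Mr * Sn (\<lambda>i. y i - y' i) * R0" .
    qed
    also have "\<dots> \<le> 2 * (Mr * Sn (\<lambda>i. y i - y' i) * R0)"
      using cardT Mr1 R0pos sn_nonneg[OF n, of "\<lambda>i. y i - y' i"] unfolding Sn_def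
      by (intro mult_right_mono) auto
    also have "\<dots> = (2 * Mr * R0) * Sn (\<lambda>i. y i - y' i)" by simp
    also have "\<dots> \<le> \<gamma> * Sn (\<lambda>i. y i - y' i)"
    proof (rule mult_right_mono)
      show "2 * Mr * R0 \<le> \<gamma>" using gam unfolding Mr_def M_def R0_def by simp
      show "0 \<le> Sn (\<lambda>i. y i - y' i)" unfolding Sn_def by (rule sn_nonneg[OF n])
    qed
    finally show ?thesis .
  qed
  have \<Phi>p: "\<Phi> (p g) = cg g" if g: "g \<in> G" for g
  proof -
    have "\<phi> g' (p g) *\<^sub>R w g' = (if g' = g then w g' else 0)" if g': "g' \<in> G" for g'
    proof (cases "g' = g")
      case True
      have "Sn (\<lambda>i. p g i - p g i) = 0" unfolding Sn_def by (rule sn_self[OF n])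
      then show ?thesis using True unfolding \<phi>_def by simp
    next
      case False
      have "2 / Mr \<le> Sn (\<lambda>i. p g i - p g' i)" using sep[OF g g'] False by simp
      then have "2 \<le> Mr * Sn (\<lambda>i. p g i - p g' i)" using Mr1 by (simp add: field_simps)
      then have "\<phi> g' (p g) = 0" unfolding \<phi>_def by simp
      then show ?thesis using False by simp
    qed
    then have "(\<Sum>g'\<in>G. \<phi> g' (p g) *\<^sub>R w g') = (\<Sum>g'\<in>G. if g' = g then w g' else 0)"
      by (rule sum.cong[OF refl])
    also have "\<dots> = w g" using g finG by simp
    finally show ?thesis unfolding \<Phi>_def w_def by simp
  qed
  have sn_n: "is_norm_on_Rk n Sn" unfolding Sn_def by (rule sn_norm[OF n])
  have pball: "p g \<in> unit_ball_Rk n Sn" if g: "g \<in> G" for g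
  proof -
    have "p g \<in> Rk n" unfolding p_def Rk_def by simp
    moreover have "Sn (p g) \<le> 1" unfolding Sn_def
    proof (rule sn_le[OF n])
      fix i assume i: "i < n"
      have gi: "g i < M" using g i unfolding G_def by blast
      then have "real (g i) + 1 \<le> Mr" unfolding Mr_def by linarith
      then have "0 \<le> (2 * real (g i) + 1) / Mr" "(2 * real (g i) + 1) / Mr \<le> 2"
        using Mr1 by (simp_all add: field_simps)
      then show "\<bar>p g i\<bar> \<le> 1" unfolding p_def using i by simp
    qed
    ultimately show ?thesis unfolding unit_ball_Rk_def by simp
  qed
  have approx: "\<exists>y\<in>unit_ball_Rk n Sn. norm (f - \<Phi> y) \<le> \<epsilon>" if f: "f \<in> K" for f
  proof -
    obtain c where c: "c \<in> C" "f \<in> cball c \<epsilon>" using C(3) f by blast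
    then have cC': "c \<in> C'" unfolding C'_def using f by auto
    have hc: "h c \<in> G" using h(1) cC' by blast
    have "\<Phi> (p (h c)) = c" using \<Phi>p[OF hc] cgh[OF cC'] by simp
    then have "norm (f - \<Phi> (p (h c))) \<le> \<epsilon>" using c(2) by (simp add: dist_norm norm_minus_commute)
    then show ?thesis using pball[OF hc] by blast
  qed
  have "\<Phi> \<in> lipset \<gamma> n Sn" unfolding lipset_def using lip by blast
  moreover have "\<gamma> \<ge> 0" using gam R0pos unfolding R0_def by (smt (verit) zero_le_mult_iff zero_le_power)
  ultimately have "lip_width \<gamma> K n \<le> val n Sn \<Phi>" using L_le[OF _ n order_refl sn_n] by blast
  also have "\<dots> \<le> \<epsilon>" by (rule val_le[OF sn_n approx])
  finally show ?thesis .
qed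

end

context kset begin

lemma D_in_Eset: "x0 \<in> K \<Longrightarrow> D > 0 \<Longrightarrow> \<forall>f\<in>K. norm (f - x0) \<le> D \<Longrightarrow> D \<in> Eset m"
  unfolding Eset_def
  by (intro CollectI conjI exI[of _ "{x0}"]) (auto simp: dist_norm norm_minus_commute)

lemma UB:
  assumes x0: "x0 \<in> K" and Dp: "D > 0" and D: "\<forall>f\<in>K. norm (f - x0) \<le> D" and n: "n \<ge> 1"
    and gam: "2 * 2 ^ n * (2 * D + 1) \<le> \<gamma>"
  shows "lip_width \<gamma> K n \<le> entropy_number K (n * n)"
proof (rule ccontr)
  assume "\<not> ?thesis"
  then have lt: "entropy_number K (n * n) < lip_width \<gamma> K n" by simp
  have "entropy_number K (n * n) \<le> D" by (rule e_le[OF D_in_Eset[OF x0 Dp D]])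
  then have "entropy_number K (n * n) < min (lip_width \<gamma> K n) (D + 1)" using lt by simp
  then obtain \<epsilon> where e: "\<epsilon> \<in> Eset (n * n)" "\<epsilon> < min (lip_width \<gamma> K n) (D + 1)" using e_ex by blast
  then obtain C where C: "\<epsilon> > 0" "finite C" "card C \<le> 2 ^ (n * n)" "K \<subseteq> (\<Union>c\<in>C. cball c \<epsilon>)"
    unfolding Eset_def by blast
  have "lip_width \<gamma> K n \<le> \<epsilon>"
    by (rule grid_ub[OF x0 D n gam C(1) _ C(2-4)]) (use e in simp)
  then show False using e by simp
qed

lemma L_le_D:
  assumes x0: "x0 \<in> K" and D: "\<forall>f\<in>K. norm (f - x0) \<le> D" and n: "n \<ge> 1" and g: "\<gamma> \<ge> 0"
  shows "lip_width \<gamma> K n \<le> D"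
proof -
  have sn: "is_norm_on_Rk 1 (supnorm 1)" by (rule sn_norm) simp
  have "lip_width \<gamma> K n \<le> val 1 (supnorm 1) (\<lambda>_. x0)"
    by (rule L_le[OF g _ n sn const_lip[OF g sn]]) simp
  also have "\<dots> \<le> D"
    by (rule val_le[OF sn]) (use ball_zero[OF sn] D in blast)
  finally show ?thesis .
qed

end

lemma log2_le_self: "n \<ge> 1 \<Longrightarrow> log 2 (real n) \<le> real n"
proof -
  assume n: "n \<ge> 1"
  have "real n \<le> 2 ^ n" using less_exp[of n] by (metis less_imp_le of_nat_less_iff of_nat_numeral of_nat_power)
  then have "log 2 (real n) \<le> log 2 (2 ^ n)" using n by (intro log_mono) auto
  also have "\<dots> = real n" by (simp add: log_nat_power)
  finally show ?thesis .
qed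

lemma log_prod2: "x \<ge> 0 \<Longrightarrow> y \<ge> 0 \<Longrightarrow> log 2 (1 + x * y) \<le> log 2 (1 + x) + log 2 (1 + y)"
proof -
  assume xy: "x \<ge> 0" "y \<ge> 0"
  have "1 + x * y \<le> (1 + x) * (1 + y)" using xy by (simp add: algebra_simps)
  then have "log 2 (1 + x * y) \<le> log 2 ((1 + x) * (1 + y))"
    using xy by (intro log_mono) (auto intro: add_pos_nonneg)
  also have "\<dots> = log 2 (1 + x) + log 2 (1 + y)" using xy by (simp add: log_mult)
  finally show ?thesis .
qed

lemma log_pow_bound:
  assumes a: "a \<ge> 0" and n: "n \<ge> 1" and x: "0 \<le> x" "x \<le> real n powr a"
  shows "log 2 (1 + x) \<le> 1 + a * real n"
proof -
  have ge1: "real n powr a \<ge> 1" using n a by (simp add: ge_one_powr_ge_zero)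
  have "1 + x \<le> 2 * real n powr a" using x ge1 by simp
  then have "log 2 (1 + x) \<le> log 2 (2 * real n powr a)" using x by (intro log_mono) auto
  also have "\<dots> = 1 + a * log 2 (real n)" using n by (simp add: log_mult log_powr)
  also have "\<dots> \<le> 1 + a * real n" using log2_le_self[OF n] a by (simp add: mult_left_mono)
  finally show ?thesis .
qed

lemma gamma_log:
  assumes C: "C' > 0" and lam: "lam > 2" and n: "n \<ge> 1"
  shows "log 2 (1 + C' * real n powr \<delta> * lam ^ n) \<le> (log 2 (1 + C') + 2 + \<bar>\<delta>\<bar> + log 2 lam) * real n"
proof -
  have "log 2 (1 + C' * real n powr \<delta> * lam ^ n) \<le> log 2 (1 + C' * real n powr \<delta>) + log 2 (1 + lam ^ n)"
    using C lam by (intro log_prod2) auto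
  also have "log 2 (1 + C' * real n powr \<delta>) \<le> log 2 (1 + C') + log 2 (1 + real n powr \<delta>)"
    using C by (intro log_prod2) auto
  also have "log 2 (1 + real n powr \<delta>) \<le> 1 + \<bar>\<delta>\<bar> * real n"
    using n by (intro log_pow_bound) (auto intro: powr_mono)
  also have "log 2 (1 + lam ^ n) \<le> 1 + log 2 lam * real n"
  proof -
    have "1 + lam ^ n \<le> 2 * lam ^ n" using lam by (simp add: one_le_power)
    then have "log 2 (1 + lam ^ n) \<le> log 2 (2 * lam ^ n)" using lam by (intro log_mono) (auto intro: add_pos_nonneg)
    also have "\<dots> = 1 + log 2 lam * real n" using lam by (simp add: log_mult log_nat_power)
    finally show ?thesis .
  qed
  finally have "log 2 (1 + C' * real n powr \<delta> * lam ^ n) \<le> log 2 (1 + C') + 2 + (\<bar>\<delta>\<bar> + log 2 lam) * real n"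
    by (simp add: algebra_simps)
  also have "\<dots> \<le> (log 2 (1 + C') + 2 + \<bar>\<delta>\<bar> + log 2 lam) * real n"
  proof -
    have "log 2 (1 + C') \<ge> 0" using C by simp
    then have "log 2 (1 + C') + 2 \<le> (log 2 (1 + C') + 2) * real n" using n
      by (metis mult.right_neutral mult_left_mono of_nat_1 of_nat_le_iff add_nonneg_nonneg zero_le_numeral)
    then show ?thesis by (simp add: algebra_simps)
  qed
  finally show ?thesis .
qed

lemma exists_j:
  fixes A p c :: real
  assumes "c > 0"
  shows "\<exists>j::nat. 2 * (A + real j) powr p / 2 ^ j < c"
proof -
  have "((\<lambda>j::nat. 2 * (A + real j) powr p / 2 ^ j) \<longlongrightarrow> 0) sequentially" by real_asymp
  then have "eventually (\<lambda>j. 2 * (A + real j) powr p / 2 ^ j < c) sequentially"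
    using assms by (rule order_tendstoD(2))
  then show ?thesis by (meson eventually_sequentially order_refl)
qed

lemma exists_n0:
  fixes C' \<delta> lam Z :: real
  assumes C: "C' > 0" and lam: "lam > 2"
  shows "\<exists>n0. \<forall>n\<ge>n0. 2 ^ n * Z \<le> C' * real n powr \<delta> * lam ^ n"
proof -
  define l where "l = ln (lam / 2)"
  have l: "l > 0" unfolding l_def using lam by simp
  have "filterlim (\<lambda>n::nat. C' * real n powr \<delta> * exp (l * real n)) at_top at_top"
    using C l by real_asymp
  then have "eventually (\<lambda>n. Z \<le> C' * real n powr \<delta> * exp (l * real n)) sequentially"
    by (simp add: filterlim_at_top)
  then obtain n0 where n0: "\<And>n. n \<ge> n0 \<Longrightarrow> Z \<le> C' * real n powr \<delta> * exp (l * real n)"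
    unfolding eventually_sequentially by blast
  have eq: "C' * real n powr \<delta> * lam ^ n = 2 ^ n * (C' * real n powr \<delta> * exp (l * real n))" for n
  proof -
    have "exp (l * real n) = exp l ^ n" by (simp add: exp_of_nat_mult[symmetric] mult.commute)
    also have "exp l = lam / 2" unfolding l_def using lam by simp
    finally have "exp (l * real n) = (lam / 2) ^ n" .
    moreover have "lam ^ n = 2 ^ n * (lam / 2) ^ n" by (simp add: power_divide)
    ultimately show ?thesis by simp
  qed
  show ?thesis
  proof (intro exI allI impI)
    fix n assume "n \<ge> n0"
    then show "2 ^ n * Z \<le> C' * real n powr \<delta> * lam ^ n"
      unfolding eq using n0 by (intro mult_left_mono) auto
  qed
qed

context kset begin

lemma generic:
  fixes b' :: "nat \<Rightarrow> real" and C' \<delta> lam Q c p C1 :: real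
  assumes C'pos: "C' > 0" and lam: "lam > 2"
    and bpos: "\<And>n. n \<ge> 2 \<Longrightarrow> b' n > 0"
    and Qb: "\<And>n. n \<ge> 2 \<Longrightarrow> log 2 (1 + 1 / b' n) \<le> Q * real n"
    and lowb: "\<And>D' n. D' \<ge> 1 \<Longrightarrow> n \<ge> 2 \<Longrightarrow> c * (real D' + 2) powr (- p) * b' n \<le> entropy_number K (D' * (n * n))"
    and cpos: "c > 0" and p: "p \<ge> 0"
    and upb: "\<And>n. n \<ge> 2 \<Longrightarrow> entropy_number K (n * n) \<le> C1 * b' n"
  shows "asymp_equiv_ge2 (\<lambda>n. lip_width (C' * real n powr \<delta> * lam ^ n) K n) b'"
proof -
  define \<gamma> where "\<gamma> = (\<lambda>n::nat. C' * real n powr \<delta> * lam ^ n)"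
  have gpos: "\<gamma> n > 0" if "n \<ge> 1" for n using that C'pos lam unfolding \<gamma>_def by simp
  define P where "P = log 2 (1 + C') + 2 + \<bar>\<delta>\<bar> + log 2 lam"
  have Pb: "log 2 (1 + \<gamma> n) \<le> P * real n" if "n \<ge> 1" for n
    unfolding P_def \<gamma>_def by (rule gamma_log[OF C'pos lam that])
  have P0: "P \<ge> 0" unfolding P_def using C'pos lam by simp
  have "0 \<le> log 2 (1 + 1 / b' 2)" using bpos[of 2] by (subst zero_le_log_cancel_iff) (auto intro: add_pos_pos)
  then have Q0: "Q \<ge> 0" using Qb[of 2] by simp
  define A where "A = 9 + P + Q"
  obtain j where j: "2 * (A + real j) powr p / 2 ^ j < c" using exists_j[OF cpos] by blast
  define \<kappa> :: real where "\<kappa> = 1 / 2 ^ j"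
  have \<kappa>pos: "\<kappa> > 0" unfolding \<kappa>_def by simp
  have low: "\<kappa> * b' n \<le> lip_width (\<gamma> n) K n" if n: "n \<ge> 2" for n
  proof (rule ccontr)
    assume "\<not> ?thesis"
    then have L: "lip_width (\<gamma> n) K n < \<kappa> * b' n" by simp
    define t where "t = \<kappa> * b' n"
    have tpos: "t > 0" unfolding t_def using \<kappa>pos bpos[OF n] by simp
    have g: "\<gamma> n > 0" using gpos n by simp
    define \<eta> where "\<eta> = t / \<gamma> n"
    have \<eta>pos: "\<eta> > 0" unfolding \<eta>_def using tpos g by simp
    define x where "x = log 2 (1 + 2 / \<eta>)"
    have x0: "x \<ge> 0" unfolding x_def using \<eta>pos by (subst zero_le_log_cancel_iff) (auto intro: add_pos_pos)
    define q where "q = nat \<lceil>x\<rceil>"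
    have qx: "x \<le> real q" "real q \<le> x + 1" unfolding q_def using x0 by linarith+
    have "1 + 2 / \<eta> = 2 powr x" unfolding x_def using \<eta>pos by (simp add: add_pos_pos)
    also have "\<dots> \<le> 2 powr real q" using qx by (intro powr_mono) auto
    also have "\<dots> = 2 ^ q" by (simp add: powr_realpow)
    finally have qok: "1 + 2 / \<eta> \<le> 2 ^ q" .
    have eLB: "entropy_number K (n * (3 * n + q)) \<le> t + \<gamma> n * \<eta>"
      by (rule LB[OF g _ tpos \<eta>pos qok]) (use n L t_def in auto)
    have "t + \<gamma> n * \<eta> = 2 * t" unfolding \<eta>_def using g by simp
    with eLB have e1: "entropy_number K (n * (3 * n + q)) \<le> 2 * t" by simp
    have "2 / \<eta> = 2 ^ (j + 1) * \<gamma> n * (1 / b' n)"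
      unfolding \<eta>_def t_def \<kappa>_def using g bpos[OF n] by (simp add: field_simps)
    then have "x = log 2 (1 + 2 ^ (j + 1) * \<gamma> n * (1 / b' n))" unfolding x_def by simp
    also have "\<dots> \<le> log 2 (1 + 2 ^ (j + 1) * \<gamma> n) + log 2 (1 + 1 / b' n)"
      using g bpos[OF n] by (intro log_prod2) auto
    also have "log 2 (1 + 2 ^ (j + 1) * \<gamma> n) \<le> log 2 (1 + 2 ^ (j + 1)) + log 2 (1 + \<gamma> n)"
      using g by (intro log_prod2) auto
    also have "log 2 (1 + 2 ^ (j + 1)) \<le> real j + 2"
    proof -
      have h1: "(1::real) \<le> 2 ^ (j + 1)" by (rule one_le_power) simp
      have "(2::real) ^ (j + 2) = 2 ^ (j + 1) + 2 ^ (j + 1)" by simp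
      then have "1 + (2::real) ^ (j + 1) \<le> 2 ^ (j + 2)" using h1 by linarith
      then have "log 2 (1 + 2 ^ (j + 1)) \<le> log 2 (2 ^ (j + 2))" by (intro log_mono) (auto intro: add_pos_pos)
      also have "\<dots> = real j + 2" by (subst log_nat_power) simp_all
      finally show ?thesis .
    qed
    also have "log 2 (1 + \<gamma> n) \<le> P * real n" using Pb n by simp
    also have "log 2 (1 + 1 / b' n) \<le> Q * real n" using Qb[OF n] .
    finally have xb: "x \<le> real j + 2 + P * real n + Q * real n" by simp
    have nr: "real n \<ge> 2" using n by simp
    have nn: "real n \<le> real n * real n" using nr by simp
    define D' where "D' = nat \<lceil>6 + real j + P + Q\<rceil>"
    have D'r: "6 + real j + P + Q \<le> real D'" "real D' \<le> 7 + real j + P + Q"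
      unfolding D'_def using P0 Q0 by linarith+
    have D'1: "D' \<ge> 1" using D'r(1) P0 Q0 by linarith
    have "real (n * (3 * n + q)) = 3 * (real n * real n) + real n * real q" by (simp add: algebra_simps)
    also have "\<dots> \<le> 3 * (real n * real n) + real n * (real j + 3 + (P + Q) * real n)"
      using qx(2) xb nr by (intro add_left_mono mult_left_mono) (auto simp: algebra_simps)
    also have "\<dots> = 3 * (real n * real n) + (real j + 3) * real n + (P + Q) * (real n * real n)"
      by (simp add: algebra_simps)
    also have "\<dots> \<le> 3 * (real n * real n) + (real j + 3) * (real n * real n) + (P + Q) * (real n * real n)"
      using nn P0 Q0 by (intro add_mono mult_left_mono) auto
    also have "\<dots> = (6 + real j + P + Q) * (real n * real n)" by (simp add: algebra_simps)
    also have "\<dots> \<le> real D' * (real n * real n)" using D'r(1) by (intro mult_right_mono) simp_all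
    also have "\<dots> = real (D' * (n * n))" by simp
    finally have "n * (3 * n + q) \<le> D' * (n * n)" by linarith
    then have "entropy_number K (D' * (n * n)) \<le> entropy_number K (n * (3 * n + q))" by (rule e_mono)
    with e1 lowb[OF D'1 n] have "c * (real D' + 2) powr (- p) * b' n \<le> 2 * t" by linarith
    then have c1: "c * (real D' + 2) powr (- p) \<le> 2 * \<kappa>" unfolding t_def using bpos[OF n] by simp
    have "(A + real j) powr (- p) \<le> (real D' + 2) powr (- p)"
      using D'r(2) p unfolding A_def by (intro powr_mono2') auto
    then have "c * (A + real j) powr (- p) \<le> 2 * \<kappa>" using c1 cpos by (smt (verit) mult_left_mono)
    moreover have Ap: "A + real j > 0" unfolding A_def using P0 Q0 by simp
    ultimately have "c \<le> 2 * \<kappa> * (A + real j) powr p" using Ap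
      by (simp add: powr_minus field_simps)
    then have "c \<le> 2 * (A + real j) powr p / 2 ^ j" unfolding \<kappa>_def by simp
    then show False using j by simp
  qed
  obtain x0 D where xD: "x0 \<in> K" "D > 0" "\<forall>f\<in>K. norm (f - x0) \<le> D" using bndK by blast
  obtain n0 where n0: "\<And>n. n \<ge> n0 \<Longrightarrow> 2 ^ n * (2 * (2 * D + 1)) \<le> \<gamma> n"
    using exists_n0[OF C'pos lam, of "2 * (2 * D + 1)" \<delta>] unfolding \<gamma>_def by blast
  define Mx where "Mx = Max ((\<lambda>n. 1 / b' n) ` {2..n0})"
  define Cu where "Cu = max \<kappa> (max C1 (D * Mx))"
  have up: "lip_width (\<gamma> n) K n \<le> Cu * b' n" if n: "n \<ge> 2" for n
  proof (cases "n \<ge> n0")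
    case True
    have "lip_width (\<gamma> n) K n \<le> entropy_number K (n * n)"
    proof (rule UB[OF xD])
      have eq: "2 * 2 ^ n * (2 * D + 1) = (2::real) ^ n * (2 * (2 * D + 1))" by (simp only: mult_ac)
      show "2 * 2 ^ n * (2 * D + 1) \<le> \<gamma> n" unfolding eq by (rule n0[OF True])
    qed (use n in simp)
    also have "\<dots> \<le> C1 * b' n" by (rule upb[OF n])
    also have "\<dots> \<le> Cu * b' n" unfolding Cu_def using bpos[OF n] by (intro mult_right_mono) simp_all
    finally show ?thesis .
  next
    case False
    have "lip_width (\<gamma> n) K n \<le> D" by (rule L_le_D[OF xD(1,3)]) (use n gpos[of n] in auto)
    also have "D = D * (1 / b' n) * b' n" using bpos[OF n] by simp
    also have "\<dots> \<le> D * Mx * b' n"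
    proof -
      have "1 / b' n \<le> Mx" unfolding Mx_def using False n by (intro Max_ge) auto
      then have "D * (1 / b' n) \<le> D * Mx" using xD(2) mult_left_mono[of "1 / b' n" Mx D] by linarith
      then show ?thesis using bpos[OF n] mult_right_mono[of "D * (1 / b' n)" "D * Mx" "b' n"] by linarith
    qed
    also have "\<dots> \<le> Cu * b' n" unfolding Cu_def using bpos[OF n] by (intro mult_right_mono) simp_all
    finally show ?thesis .
  qed
  have "\<kappa> \<le> Cu" unfolding Cu_def by simp
  have all: "\<forall>n\<ge>2. \<kappa> * b' n \<le> lip_width (C' * real n powr \<delta> * lam ^ n) K n \<and>
      lip_width (C' * real n powr \<delta> * lam ^ n) K n \<le> Cu * b' n"
    using low up unfolding \<gamma>_def by blast
  then show ?thesis unfolding asymp_equiv_ge2_def using \<kappa>pos \<open>\<kappa> \<le> Cu\<close> by blast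
qed

end

lemma logs:
  assumes D: "D' \<ge> 1" and n: "n \<ge> 2"
  shows "log 2 (real (D' * (n * n))) = log 2 (real D') + 2 * log 2 (real n)"
proof -
  have "real (D' * (n * n)) = real D' * (real n * real n)" by simp
  then show ?thesis using D n by (simp add: log_mult)
qed

lemma Lge1: "n \<ge> 2 \<Longrightarrow> 1 \<le> log 2 (real n)"
  by simp

lemma W_bounds:
  assumes D: "D' \<ge> 1" and n: "n \<ge> 2"
  defines "L \<equiv> log 2 (real n)"
  shows "L \<le> log 2 (real (D' * (n * n)))" "log 2 (real (D' * (n * n))) \<le> (real D' + 2) * L"
proof -
  have L1: "L \<ge> 1" unfolding L_def using n by simp
  have lD: "0 \<le> log 2 (real D')" using D by simp
  have lD2: "log 2 (real D') \<le> real D'" using log2_le_self[OF D] .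
  show "L \<le> log 2 (real (D' * (n * n)))" unfolding logs[OF D n] L_def[symmetric] using lD L1 by simp
  have "real D' \<le> real D' * L" using L1 D by simp
  then show "log 2 (real (D' * (n * n))) \<le> (real D' + 2) * L"
    unfolding logs[OF D n] L_def[symmetric] using lD2 by (simp add: algebra_simps)
qed

lemma sq_powr: "real (n * n) powr a = real n powr (2 * a)"
proof -
  have "real (n * n) powr a = real n powr a * real n powr a" by (simp add: powr_mult)
  also have "\<dots> = real n powr (a + a)" by (rule powr_add[symmetric])
  also have "a + a = 2 * a" by simp
  finally show ?thesis .
qed

lemma caseI_low:
  assumes a: "\<alpha> > 0" and D: "D' \<ge> 1" and n: "n \<ge> 2"
  shows "(real D' + 2) powr (- (\<bar>\<beta>\<bar> + \<alpha>)) * (log 2 (real n) powr \<beta> / real n powr (2 * \<alpha>))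
     \<le> log 2 (real (D' * (n * n))) powr \<beta> / real (D' * (n * n)) powr \<alpha>"
proof -
  define L where "L = log 2 (real n)"
  define W where "W = log 2 (real (D' * (n * n)))"
  define E where "E = real D' + 2"
  have L1: "L \<ge> 1" unfolding L_def using n by simp
  have E1: "E \<ge> 1" unfolding E_def by simp
  have LW: "L \<le> W" "W \<le> E * L" using W_bounds[OF D n] unfolding L_def W_def E_def by auto
  have Wpos: "W > 0" using LW L1 by simp
  have Wb: "E powr (- \<bar>\<beta>\<bar>) * L powr \<beta> \<le> W powr \<beta>"
  proof (cases "\<beta> \<ge> 0")
    case True
    have "E powr (- \<bar>\<beta>\<bar>) \<le> 1" using E1 by (simp add: powr_minus_divide ge_one_powr_ge_zero)
    then have "E powr (- \<bar>\<beta>\<bar>) * L powr \<beta> \<le> L powr \<beta>" using L1 by (simp add: mult_left_le_one_le)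
    also have "\<dots> \<le> W powr \<beta>" using True LW L1 by (intro powr_mono2) auto
    finally show ?thesis .
  next
    case False
    have "(E * L) powr \<beta> \<le> W powr \<beta>" using False LW Wpos by (intro powr_mono2') auto
    moreover have "(E * L) powr \<beta> = E powr (- \<bar>\<beta>\<bar>) * L powr \<beta>" using False E1 L1 by (simp add: powr_mult)
    ultimately show ?thesis by simp
  qed
  have "real (D' * (n * n)) powr \<alpha> = real D' powr \<alpha> * real (n * n) powr \<alpha>"
    by (simp only: of_nat_mult powr_mult)
  also have "\<dots> = real D' powr \<alpha> * real n powr (2 * \<alpha>)" by (simp only: sq_powr)
  finally have "real (D' * (n * n)) powr \<alpha> = real D' powr \<alpha> * real n powr (2 * \<alpha>)" .
  also have "\<dots> \<le> E powr \<alpha> * real n powr (2 * \<alpha>)" unfolding E_def using a by (intro mult_right_mono powr_mono2) auto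
  finally have den: "real (D' * (n * n)) powr \<alpha> \<le> E powr \<alpha> * real n powr (2 * \<alpha>)" .
  have dpos: "real (D' * (n * n)) powr \<alpha> > 0" using D n by simp
  have "E powr (- (\<bar>\<beta>\<bar> + \<alpha>)) * (L powr \<beta> / real n powr (2 * \<alpha>)) = (E powr (- \<bar>\<beta>\<bar>) * L powr \<beta>) / (E powr \<alpha> * real n powr (2 * \<alpha>))"
  proof -
    have "- (\<bar>\<beta>\<bar> + \<alpha>) = - \<bar>\<beta>\<bar> + - \<alpha>" by simp
    then have "E powr (- (\<bar>\<beta>\<bar> + \<alpha>)) = E powr (- \<bar>\<beta>\<bar>) * E powr (- \<alpha>)" by (simp only: powr_add)
    also have "E powr (- \<alpha>) = 1 / E powr \<alpha>" by (simp add: powr_minus_divide)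
    finally have "E powr (- (\<bar>\<beta>\<bar> + \<alpha>)) = E powr (- \<bar>\<beta>\<bar>) * (1 / E powr \<alpha>)" .
    moreover have "E powr \<alpha> > 0" "real n powr (2 * \<alpha>) > 0" using E1 n by auto
    ultimately show ?thesis by (simp add: field_simps)
  qed
  also have "\<dots> \<le> W powr \<beta> / (E powr \<alpha> * real n powr (2 * \<alpha>))"
    using Wb E1 n by (intro divide_right_mono) auto
  also have "\<dots> \<le> W powr \<beta> / real (D' * (n * n)) powr \<alpha>"
  proof (rule divide_left_mono[OF den])
    have "E powr \<alpha> * real n powr (2 * \<alpha>) > 0" using E1 n by simp
    then show "0 < E powr \<alpha> * real n powr (2 * \<alpha>) * real (D' * (n * n)) powr \<alpha>"
      using dpos by (rule mult_pos_pos)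
  qed simp
  finally show ?thesis unfolding L_def W_def E_def .
qed

lemma caseI_up:
  assumes n: "n \<ge> 2"
  shows "log 2 (real (n * n)) powr \<beta> / real (n * n) powr \<alpha> = 2 powr \<beta> * (log 2 (real n) powr \<beta> / real n powr (2 * \<alpha>))"
proof -
  have "log 2 (real (n * n)) = 2 * log 2 (real n)" using n by (simp add: log_mult)
  moreover have "real (n * n) powr \<alpha> = real n powr (2 * \<alpha>)" by (rule sq_powr)
  ultimately show ?thesis using n by (simp add: powr_mult)
qed

lemma caseI_Q:
  assumes a: "\<alpha> > 0" and n: "n \<ge> 2"
  shows "log 2 (1 + 1 / (log 2 (real n) powr \<beta> / real n powr (2 * \<alpha>))) \<le> (1 + 2 * \<alpha> + \<bar>\<beta>\<bar>) * real n"
proof -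
  define L where "L = log 2 (real n)"
  have L1: "L \<ge> 1" unfolding L_def using n by simp
  have Ln: "L \<le> real n" unfolding L_def using log2_le_self[of n] n by simp
  have x: "1 / (L powr \<beta> / real n powr (2 * \<alpha>)) = real n powr (2 * \<alpha>) * L powr (- \<beta>)"
    using L1 n by (simp add: powr_minus field_simps)
  have "L powr (- \<beta>) \<le> L powr \<bar>\<beta>\<bar>" using L1 by (intro powr_mono) auto
  also have "\<dots> \<le> real n powr \<bar>\<beta>\<bar>" using L1 Ln by (intro powr_mono2) auto
  finally have "real n powr (2 * \<alpha>) * L powr (- \<beta>) \<le> real n powr (2 * \<alpha>) * real n powr \<bar>\<beta>\<bar>"
    by (intro mult_left_mono) auto
  also have "\<dots> = real n powr (2 * \<alpha> + \<bar>\<beta>\<bar>)" using n by (simp add: powr_add)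
  finally have xb: "real n powr (2 * \<alpha>) * L powr (- \<beta>) \<le> real n powr (2 * \<alpha> + \<bar>\<beta>\<bar>)" .
  have "log 2 (1 + real n powr (2 * \<alpha>) * L powr (- \<beta>)) \<le> 1 + (2 * \<alpha> + \<bar>\<beta>\<bar>) * real n"
    using a n xb by (intro log_pow_bound) auto
  also have "\<dots> \<le> (1 + 2 * \<alpha> + \<bar>\<beta>\<bar>) * real n" using n by (simp add: algebra_simps)
  finally show ?thesis unfolding L_def[symmetric] x .
qed

lemma caseII_low:
  assumes a: "\<alpha> > 0" and D: "D' \<ge> 1" and n: "n \<ge> 2"
  shows "(real D' + 2) powr (- \<alpha>) * (1 / log 2 (real n) powr \<alpha>) \<le> 1 / log 2 (real (D' * (n * n))) powr \<alpha>"
proof -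
  define L where "L = log 2 (real n)"
  define W where "W = log 2 (real (D' * (n * n)))"
  define E where "E = real D' + 2"
  have L1: "L \<ge> 1" unfolding L_def using n by simp
  have E1: "E \<ge> 1" unfolding E_def by simp
  have LW: "L \<le> W" "W \<le> E * L" using W_bounds[OF D n] unfolding L_def W_def E_def by auto
  have Wpos: "W > 0" using LW L1 by simp
  have "W powr \<alpha> \<le> (E * L) powr \<alpha>" using LW Wpos a by (intro powr_mono2) auto
  also have "\<dots> = E powr \<alpha> * L powr \<alpha>" using E1 L1 by (simp add: powr_mult)
  finally have h: "W powr \<alpha> \<le> E powr \<alpha> * L powr \<alpha>" .
  have "E powr (- \<alpha>) * (1 / L powr \<alpha>) = 1 / (E powr \<alpha> * L powr \<alpha>)" by (simp add: powr_minus field_simps)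
  also have "\<dots> \<le> 1 / W powr \<alpha>"
  proof (rule divide_left_mono[OF h])
    show "0 < E powr \<alpha> * L powr \<alpha> * W powr \<alpha>" using E1 L1 Wpos by simp
  qed simp
  finally show ?thesis unfolding L_def W_def E_def .
qed

lemma caseII_up:
  assumes a: "\<alpha> > 0" and n: "n \<ge> 2"
  shows "1 / log 2 (real (n * n)) powr \<alpha> \<le> 1 * (1 / log 2 (real n) powr \<alpha>)"
proof -
  have "log 2 (real (n * n)) = 2 * log 2 (real n)" using n by (simp add: log_mult)
  moreover have "log 2 (real n) powr \<alpha> \<le> (2 * log 2 (real n)) powr \<alpha>" using n a by (intro powr_mono2) auto
  moreover have "log 2 (real n) powr \<alpha> > 0" using Lge1[OF n] by simp
  ultimately show ?thesis by (simp add: divide_left_mono)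
qed

lemma caseII_Q:
  assumes a: "\<alpha> > 0" and n: "n \<ge> 2"
  shows "log 2 (1 + 1 / (1 / log 2 (real n) powr \<alpha>)) \<le> (1 + \<alpha>) * real n"
proof -
  define L where "L = log 2 (real n)"
  have L1: "L \<ge> 1" unfolding L_def using n by simp
  have Ln: "L \<le> real n" unfolding L_def using log2_le_self[of n] n by simp
  have "L powr \<alpha> \<le> real n powr \<alpha>" using L1 Ln a by (intro powr_mono2) auto
  then have "log 2 (1 + L powr \<alpha>) \<le> 1 + \<alpha> * real n" using a n by (intro log_pow_bound) auto
  also have "\<dots> \<le> (1 + \<alpha>) * real n" using n by (simp add: algebra_simps)
  finally show ?thesis unfolding L_def[symmetric] by simp
qed

lemma entropy_empty: "entropy_number ({}::'a::real_normed_vector set) m = 0"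
proof -
  have "{\<epsilon>. \<epsilon> > 0 \<and> (\<exists>C. finite C \<and> card C \<le> 2 ^ m \<and> ({}::'a set) \<subseteq> (\<Union>c\<in>C. cball c \<epsilon>))} = {0<..}"
    by (auto intro: exI[of _ "{}"])
  then show ?thesis unfolding entropy_number_def by simp
qed

lemma nonempty_from_hyp:
  assumes "asymp_equiv_ge2 (entropy_number K) b" and "b 2 > 0"
  shows "K \<noteq> {}"
proof
  assume K: "K = {}"
  obtain c C where "0 < c" "\<forall>n\<ge>2. c * b n \<le> entropy_number K n"
    using assms(1) unfolding asymp_equiv_ge2_def by blast
  then have "c * b 2 \<le> 0" using entropy_empty K by (metis order_refl)
  moreover have "c * b 2 > 0" using \<open>0 < c\<close> assms(2) by simp
  ultimately show False by simp
qed

theorem corollary7p4: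
  fixes K :: "'a::banach set" and C' \<delta> lam :: real
  assumes "compact K" and "C' > 0" and "lam > 2"
  defines "\<gamma> \<equiv> (\<lambda>n::nat. C' * real n powr \<delta> * lam ^ n)"
  shows "(\<forall>\<alpha>>0. \<forall>\<beta>::real.
            asymp_equiv_ge2 (entropy_number K) (\<lambda>n. (log 2 (real n)) powr \<beta> / real n powr \<alpha>) \<longrightarrow>
            asymp_equiv_ge2 (\<lambda>n. lip_width (\<gamma> n) K n) (\<lambda>n. (log 2 (real n)) powr \<beta> / real n powr (2 * \<alpha>)))
       \<and> (\<forall>\<alpha>>0.
            asymp_equiv_ge2 (entropy_number K) (\<lambda>n. 1 / (log 2 (real n)) powr \<alpha>) \<longrightarrow>
            asymp_equiv_ge2 (\<lambda>n. lip_width (\<gamma> n) K n) (\<lambda>n. 1 / (log 2 (real n)) powr \<alpha>))"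
proof (intro conjI allI impI)
  fix \<alpha> \<beta> :: real
  assume a: "\<alpha> > 0" and H: "asymp_equiv_ge2 (entropy_number K) (\<lambda>n. (log 2 (real n)) powr \<beta> / real n powr \<alpha>)"
  define b where "b = (\<lambda>n::nat. (log 2 (real n)) powr \<beta> / real n powr \<alpha>)"
  define b' where "b' = (\<lambda>n::nat. (log 2 (real n)) powr \<beta> / real n powr (2 * \<alpha>))"
  obtain cH CH where cH: "0 < cH" "cH \<le> CH" and HH: "\<And>n. n \<ge> 2 \<Longrightarrow> cH * b n \<le> entropy_number K n \<and> entropy_number K n \<le> CH * b n"
    using H unfolding asymp_equiv_ge2_def b_def by blast
  have "K \<noteq> {}" by (rule nonempty_from_hyp[OF H]) simp
  interpret kset K by (rule kset.intro[OF assms(1) \<open>K \<noteq> {}\<close>])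
  have bpos: "b' n > 0" if "n \<ge> 2" for n
  proof -
    have h: "1 \<le> log 2 (real n)" by (rule Lge1[OF that])
    have "log 2 (real n) \<noteq> 0" "real n \<noteq> 0" using h that by linarith+
    then show ?thesis unfolding b'_def by simp
  qed
  have "asymp_equiv_ge2 (\<lambda>n. lip_width (C' * real n powr \<delta> * lam ^ n) K n) b'"
  proof (rule generic[OF assms(2,3) bpos])
    show "log 2 (1 + 1 / b' n) \<le> (1 + 2 * \<alpha> + \<bar>\<beta>\<bar>) * real n" if "n \<ge> 2" for n
      unfolding b'_def by (rule caseI_Q[OF a that])
    show "cH * (real D' + 2) powr (- (\<bar>\<beta>\<bar> + \<alpha>)) * b' n \<le> entropy_number K (D' * (n * n))"
      if D: "D' \<ge> 1" and n: "n \<ge> 2" for D' n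
    proof -
      have s2: "2 \<le> n * n" using n le_square[of n] by linarith
      have "1 * (n * n) \<le> D' * (n * n)" by (rule mult_le_mono1[OF D])
      then have m2: "D' * (n * n) \<ge> 2" using s2 by linarith
      have "cH * ((real D' + 2) powr (- (\<bar>\<beta>\<bar> + \<alpha>)) * b' n) \<le> cH * b (D' * (n * n))"
        unfolding b_def b'_def using caseI_low[OF a D n, of \<beta>] cH(1) by (intro mult_left_mono) auto
      also have "\<dots> \<le> entropy_number K (D' * (n * n))" using HH[OF m2] by simp
      finally show ?thesis by (simp add: mult.assoc)
    qed
    show "entropy_number K (n * n) \<le> CH * 2 powr \<beta> * b' n" if n: "n \<ge> 2" for n
    proof -
      have m2: "n * n \<ge> 2" using n le_square[of n] by linarith
      have "entropy_number K (n * n) \<le> CH * b (n * n)" using HH[OF m2] by simp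
      also have "\<dots> = CH * 2 powr \<beta> * b' n" unfolding b_def b'_def using caseI_up[OF n] by simp
      finally show ?thesis .
    qed
  qed (use cH a in auto)
  then show "asymp_equiv_ge2 (\<lambda>n. lip_width (\<gamma> n) K n) (\<lambda>n. (log 2 (real n)) powr \<beta> / real n powr (2 * \<alpha>))"
    unfolding \<gamma>_def b'_def .
next
  fix \<alpha> :: real
  assume a: "\<alpha> > 0" and H: "asymp_equiv_ge2 (entropy_number K) (\<lambda>n. 1 / (log 2 (real n)) powr \<alpha>)"
  define b where "b = (\<lambda>n::nat. 1 / (log 2 (real n)) powr \<alpha>)"
  obtain cH CH where cH: "0 < cH" "cH \<le> CH" and HH: "\<And>n. n \<ge> 2 \<Longrightarrow> cH * b n \<le> entropy_number K n \<and> entropy_number K n \<le> CH * b n"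
    using H unfolding asymp_equiv_ge2_def b_def by blast
  have "K \<noteq> {}" by (rule nonempty_from_hyp[OF H]) simp
  interpret kset K by (rule kset.intro[OF assms(1) \<open>K \<noteq> {}\<close>])
  have bpos: "b n > 0" if "n \<ge> 2" for n
  proof -
    have h: "1 \<le> log 2 (real n)" by (rule Lge1[OF that])
    have "log 2 (real n) \<noteq> 0" using h by linarith
    then show ?thesis unfolding b_def by simp
  qed
  have "asymp_equiv_ge2 (\<lambda>n. lip_width (C' * real n powr \<delta> * lam ^ n) K n) b"
  proof (rule generic[OF assms(2,3) bpos])
    show "log 2 (1 + 1 / b n) \<le> (1 + \<alpha>) * real n" if "n \<ge> 2" for n
      unfolding b_def by (rule caseII_Q[OF a that])
    show "cH * (real D' + 2) powr (- \<alpha>) * b n \<le> entropy_number K (D' * (n * n))"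
      if D: "D' \<ge> 1" and n: "n \<ge> 2" for D' n
    proof -
      have s2: "2 \<le> n * n" using n le_square[of n] by linarith
      have "1 * (n * n) \<le> D' * (n * n)" by (rule mult_le_mono1[OF D])
      then have m2: "D' * (n * n) \<ge> 2" using s2 by linarith
      have "cH * ((real D' + 2) powr (- \<alpha>) * b n) \<le> cH * b (D' * (n * n))"
        unfolding b_def using caseII_low[OF a D n] cH(1) by (intro mult_left_mono) auto
      also have "\<dots> \<le> entropy_number K (D' * (n * n))" using HH[OF m2] by simp
      finally show ?thesis by (simp add: mult.assoc)
    qed
    show "entropy_number K (n * n) \<le> CH * b n" if n: "n \<ge> 2" for n
    proof -
      have m2: "n * n \<ge> 2" using n le_square[of n] by linarith
      have "entropy_number K (n * n) \<le> CH * b (n * n)" using HH[OF m2] by simp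
      also have "\<dots> \<le> CH * b n" unfolding b_def using caseII_up[OF a n] cH by (intro mult_left_mono) auto
      finally show ?thesis .
    qed
  qed (use cH a in auto)
  then show "asymp_equiv_ge2 (\<lambda>n. lip_width (\<gamma> n) K n) (\<lambda>n. 1 / (log 2 (real n)) powr \<alpha>)"
    unfolding \<gamma>_def b_def .
qed

end
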